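(* Let $\gamma:S^1\to M^1$, $u\mapsto(z(u),\zeta(u))$, be a symmetric circle. Then $\Lambda_\gamma^n$ is a positive Lagrangian if and only if both of the following hold: (a) for all $u\neq0,\pi$, $\ \frac{z'(u)(z(u))^{n-1}}{f'(\zeta(u))}=\frac{\zeta'(u)(z(u))^{n-2}}{2}\notin i\mathbb{R}$; (b) for $u=0,\pi$, $\ \frac{(z'(u))^n}{f'(\zeta(u))}\notin i\mathbb{R}$.
   Context: Fix a positive integer $n$ and a complex polynomial $f$ in one variable all of whose zeros are simple. For $k\ge1$, $M^k=\{(z_1,\ldots,z_k,\zeta)\in\mathbb{C}^{k+1}\mid z_1^2+\cdots+z_k^2=f(\zeta)\}$ with the Kähler structure induced from $\mathbb{C}^{k+1}$; on $M^n$ let $\Omega=\frac{1}{f'(\zeta)}dz_1\wedge\cdots\wedge dz_n$, a nowhere vanishing holomorphic $(n,0)$-form. A Lagrangian $\Lambda\subset M^n$ is positive if $\mathrm{Re}\,\Omega|_\Lambda$ vanishes nowhere. $S^1=\mathbb{R}/2\pi\mathbb{Z}$. A symmetric circle is a smooth embedding $\gamma:S^1\to M^1$, $u\mapsto(z(u),\zeta(u))$, with $(z(-u),\zeta(-u))=(-z(u),\zeta(u))$ for all $u$ and $z(u)\neq0$ for $u\neq0,\pi$. For such $\gamma$, $\Lambda_\gamma^n=\{(z(u)x,\zeta(u))\mid u\in S^1,x\in S^{n-1}\}\subset M^n$, which is a Lagrangian submanifold diffeomorphic to $S^n$. *)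

theory Defs
  imports "HOL-Analysis.Analysis" "HOL-Computational_Algebra.Polynomial"
begin

definition simple_zeros :: "complex poly \<Rightarrow> bool" where
  "simple_zeros f \<longleftrightarrow> (\<forall>x. poly f x = 0 \<longrightarrow> poly (pderiv f) x \<noteq> 0)"

text \<open>Points of C^(n+1) are pairs (z, zeta) with z in C^n (n = CARD('n)).
  M^n = { z_1^2 + ... + z_n^2 = f(zeta) }.\<close>
definition Mspace :: "complex poly \<Rightarrow> ((complex^'n) \<times> complex) set" where
  "Mspace f = {(z, w). (\<Sum>i\<in>UNIV. (z $ i)^2) = poly f w}"

definition vderiv :: "(real \<Rightarrow> complex) \<Rightarrow> (real \<Rightarrow> complex)" where
  "vderiv g = (\<lambda>t. vector_derivative g (at t))"

definition smooth_curve :: "(real \<Rightarrow> complex) \<Rightarrow> bool" where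
  "smooth_curve g \<longleftrightarrow> (\<forall>k t. ((vderiv ^^ k) g) differentiable (at t))"

text \<open>A symmetric circle gamma(u) = (z(u), zeta(u)), parametrised by 2pi-periodic
  functions on the real line (S^1 = R / 2 pi Z): a smooth embedding S^1 -> M^1
  (smooth, injective modulo 2 pi, immersive) with the symmetry and nonvanishing condition.\<close>
definition symmetric_circle :: "complex poly \<Rightarrow> (real \<Rightarrow> complex) \<Rightarrow> (real \<Rightarrow> complex) \<Rightarrow> bool" where
  "symmetric_circle f z \<zeta> \<longleftrightarrow>
     (\<forall>u. z (u + 2*pi) = z u \<and> \<zeta> (u + 2*pi) = \<zeta> u) \<and>
     smooth_curve z \<and> smooth_curve \<zeta> \<and>
     (\<forall>u. (z u)^2 = poly f (\<zeta> u)) \<and>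
     (\<forall>u v. z u = z v \<and> \<zeta> u = \<zeta> v \<longrightarrow> (\<exists>k::int. u - v = 2*pi* of_int k)) \<and>
     (\<forall>u. vderiv z u \<noteq> 0 \<or> vderiv \<zeta> u \<noteq> 0) \<and>
     (\<forall>u. z (-u) = - z u \<and> \<zeta> (-u) = \<zeta> u) \<and>
     (\<forall>u. (\<forall>k::int. u \<noteq> pi * of_int k) \<longrightarrow> z u \<noteq> 0)"

definition Lambda :: "(real \<Rightarrow> complex) \<Rightarrow> (real \<Rightarrow> complex) \<Rightarrow> ((complex^'n) \<times> complex) set" where
  "Lambda z \<zeta> = {((\<chi> i. z u * complex_of_real (x $ i)), \<zeta> u) | u x. (x :: real^'n) \<in> sphere 0 1}"

text \<open>Tangent vectors of a subset L at p: velocities at 0 of curves in L through p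
  (for an embedded submanifold this is the usual tangent space).\<close>
definition tangent_vectors :: "('a::real_normed_vector) set \<Rightarrow> 'a \<Rightarrow> 'a set" where
  "tangent_vectors L p = {v. \<exists>c. c 0 = p \<and> (\<forall>t. c t \<in> L) \<and> (c has_vector_derivative v) (at 0)}"

text \<open>Kaehler form omega = (i/2) sum dz_k /\ d(conj z_k) on C^(n+1).\<close>
definition kahler_form :: "((complex^'n) \<times> complex) \<Rightarrow> ((complex^'n) \<times> complex) \<Rightarrow> real" where
  "kahler_form v w = (\<Sum>k\<in>UNIV. Im (cnj (fst v $ k) * fst w $ k)) + Im (cnj (snd v) * snd w)"

text \<open>The holomorphic volume form Omega = dz_1 /\ ... /\ dz_n / f'(zeta) on M^n,
  evaluated at p on vectors v_j (j ranging over the index type 'n).  Where f'(zeta) = 0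
  we use its holomorphic extension: on tangent vectors it equals
  (-1)^(n-k)/(2 z_k) dz_1 /\ ..^k.. /\ dz_n /\ dzeta for z_k <> 0, which is the determinant
  of the z-matrix with row k replaced by the zeta-components, divided by 2 z_k.\<close>
definition Omega :: "complex poly \<Rightarrow> ((complex^'n) \<times> complex) \<Rightarrow> ('n \<Rightarrow> (complex^'n) \<times> complex) \<Rightarrow> complex" where
  "Omega f p v =
     (if poly (pderiv f) (snd p) \<noteq> 0
      then det (\<chi> i j. fst (v j) $ i) / poly (pderiv f) (snd p)
      else (let k = (SOME k. fst p $ k \<noteq> 0) in
            det (\<chi> i j. if i = k then snd (v j) else fst (v j) $ i) / (2 * fst p $ k)))"

definition lagrangian_isotropic :: "((complex^'n) \<times> complex) set \<Rightarrow> bool" where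
  "lagrangian_isotropic L \<longleftrightarrow>
     (\<forall>p\<in>L. \<forall>v\<in>tangent_vectors L p. \<forall>w\<in>tangent_vectors L p. kahler_form v w = 0)"

definition positive :: "complex poly \<Rightarrow> ((complex^'n) \<times> complex) set \<Rightarrow> bool" where
  "positive f L \<longleftrightarrow>
     (\<forall>p\<in>L. \<exists>v. (\<forall>j. v j \<in> tangent_vectors L p) \<and> Re (Omega f p v) \<noteq> 0)"

definition positive_lagrangian :: "complex poly \<Rightarrow> ((complex^'n) \<times> complex) set \<Rightarrow> bool" where
  "positive_lagrangian f L \<longleftrightarrow> lagrangian_isotropic L \<and> positive f L"

end

theory Submission
  imports Defs "HOL-Analysis.Analysis" "HOL-Computational_Algebra.Polynomial"
begin


lemma sc_diff:
  assumes "smooth_curve g"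
  shows "(g has_vector_derivative vderiv g t) (at t)"
proof -
  have "((vderiv ^^ 0) g) differentiable (at t)" using assms unfolding smooth_curve_def by blast
  then show ?thesis by (simp add: vderiv_def vector_derivative_works[symmetric])
qed

lemma deriv_shift_eq:
  assumes "\<And>u. g (u + c) = g u" "smooth_curve g"
  shows "vderiv g (u + c) = vderiv g u"
proof -
  have "((g \<circ> (\<lambda>t. t + c)) has_vector_derivative (1 *\<^sub>R vderiv g (u + c))) (at u)"
    by (rule vector_diff_chain_at) (auto intro!: derivative_eq_intros sc_diff[OF assms(2)])
  moreover have "g \<circ> (\<lambda>t. t + c) = g" using assms(1) by (auto simp: o_def)
  ultimately show ?thesis using sc_diff[OF assms(2), of u] vector_derivative_unique_at by fastforce
qed

lemma deriv_neg_eq: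
  assumes "\<And>u. g (- u) = s * g u" "smooth_curve g"
  shows "- vderiv g (- u) = s * vderiv g u"
proof -
  have "((g \<circ> uminus) has_vector_derivative ((-1) *\<^sub>R vderiv g (- u))) (at u)"
    by (rule vector_diff_chain_at) (auto intro!: derivative_eq_intros sc_diff[OF assms(2)])
  moreover have "g \<circ> uminus = (\<lambda>t. s * g t)" using assms(1) by (auto simp: o_def)
  moreover have "((\<lambda>t. s * g t) has_vector_derivative s * vderiv g u) (at u)"
    by (auto intro!: derivative_eq_intros sc_diff[OF assms(2)])
  ultimately show ?thesis using vector_derivative_unique_at by fastforce
qed

lemma periodic_int:
  assumes "\<And>u. g (u + 2*pi) = g u"
  shows "g (u + 2*pi * of_int k) = g u"
proof -
  have nat: "g (u + 2*pi*real m) = g u" for u m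
  proof (induction m arbitrary: u)
    case (Suc m)
    have "g (u + 2*pi*real (Suc m)) = g ((u + 2*pi*real m) + 2*pi)" by (simp add: algebra_simps)
    also have "\<dots> = g u" using assms Suc by simp
    finally show ?case .
  qed simp
  show ?thesis
  proof (cases "k \<ge> 0")
    case True then show ?thesis using nat[of u "nat k"] by simp
  next
    case False
    then have "g (u + 2*pi * of_int k + 2*pi*real (nat (-k))) = g (u + 2*pi * of_int k)" by (rule_tac nat)
    with False show ?thesis by simp
  qed
qed


context
  fixes f :: "complex poly" and z \<zeta> :: "real \<Rightarrow> complex"
  assumes sc: "symmetric_circle f z \<zeta>"
begin

lemma scP: "\<And>u. z (u + 2*pi) = z u" "\<And>u. \<zeta> (u + 2*pi) = \<zeta> u"
  "smooth_curve z" "smooth_curve \<zeta>" "\<And>u. (z u)^2 = poly f (\<zeta> u)"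
  "\<And>u v. z u = z v \<Longrightarrow> \<zeta> u = \<zeta> v \<Longrightarrow> (\<exists>k::int. u - v = 2*pi* of_int k)"
  "\<And>u. vderiv z u \<noteq> 0 \<or> vderiv \<zeta> u \<noteq> 0"
  "\<And>u. z (-u) = - z u" "\<And>u. \<zeta> (-u) = \<zeta> u"
  "\<And>u. (\<forall>k::int. u \<noteq> pi * of_int k) \<Longrightarrow> z u \<noteq> 0"
  using sc unfolding symmetric_circle_def by blast+

lemma zD: "(z has_vector_derivative vderiv z t) (at t)" by (rule sc_diff[OF scP(3)])
lemma \<zeta>D: "(\<zeta> has_vector_derivative vderiv \<zeta> t) (at t)" by (rule sc_diff[OF scP(4)])

lemma z_0: "z 0 = 0" using scP(8)[of 0] by simp
lemma z_pi: "z pi = 0"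
proof -
  have "z pi = z (-pi + 2*pi)" by simp
  also have "\<dots> = z (-pi)" by (rule scP(1))
  also have "\<dots> = - z pi" by (rule scP(8))
  finally show ?thesis by simp
qed

lemma zper: "z (u + 2*pi * of_int k) = z u" by (rule periodic_int) (rule scP(1))
lemma \<zeta>per: "\<zeta> (u + 2*pi * of_int k) = \<zeta> u" by (rule periodic_int) (rule scP(2))

lemma int_range: "a \<le> 2*pi * of_int k \<Longrightarrow> 2*pi * of_int k \<le> b \<Longrightarrow> a/(2*pi) \<le> of_int k \<and> of_int k \<le> b/(2*pi)"
  using pi_gt_zero by (simp add: field_simps)


lemma dz_per: "vderiv z (u + 2*pi) = vderiv z u" by (rule deriv_shift_eq[OF scP(1) scP(3)])
lemma d\<zeta>_per: "vderiv \<zeta> (u + 2*pi) = vderiv \<zeta> u" by (rule deriv_shift_eq[OF scP(2) scP(4)])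
lemma dz_neg: "vderiv z (-u) = vderiv z u"
  using deriv_neg_eq[of z "-1", OF _ scP(3)] scP(8) by simp
lemma d\<zeta>_neg: "vderiv \<zeta> (-u) = - vderiv \<zeta> u"
  using deriv_neg_eq[of \<zeta> 1, OF _ scP(4)] scP(9) by (simp add: minus_equation_iff)

lemma d\<zeta>_0: "vderiv \<zeta> 0 = 0" using d\<zeta>_neg[of 0] by simp
lemma d\<zeta>_pi: "vderiv \<zeta> pi = 0"
proof -
  have "vderiv \<zeta> pi = vderiv \<zeta> (-pi + 2*pi)" by simp
  also have "\<dots> = vderiv \<zeta> (-pi)" by (rule d\<zeta>_per)
  also have "\<dots> = - vderiv \<zeta> pi" by (rule d\<zeta>_neg)
  finally show ?thesis by simp
qed

lemma dz_0pi: "u \<in> {0, pi} \<Longrightarrow> vderiv z u \<noteq> 0"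
  using scP(7)[of u] d\<zeta>_0 d\<zeta>_pi by auto

lemma chain: "2 * z u * vderiv z u = poly (pderiv f) (\<zeta> u) * vderiv \<zeta> u"
proof -
  have "((\<lambda>t. z t * z t) has_vector_derivative (z u * vderiv z u + vderiv z u * z u)) (at u)"
    by (intro has_vector_derivative_mult zD)
  moreover have "((poly f \<circ> \<zeta>) has_vector_derivative (vderiv \<zeta> u * poly (pderiv f) (\<zeta> u))) (at u)"
    by (intro field_vector_diff_chain_at \<zeta>D poly_DERIV)
  moreover have "poly f \<circ> \<zeta> = (\<lambda>t. z t * z t)" using scP(5) by (auto simp: power2_eq_square o_def)
  ultimately show ?thesis using vector_derivative_unique_at by (fastforce simp: algebra_simps)
qed

lemma z_nz: "0 < u \<Longrightarrow> u < pi \<Longrightarrow> z u \<noteq> 0"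
proof (rule scP(10), intro allI notI)
  fix k :: int assume "0 < u" "u < pi" "u = pi * of_int k"
  then have "0 < pi * of_int k" "pi * of_int k < pi * 1" by auto
  then have "0 < (of_int k::real)" "of_int k < (1::real)" using pi_gt_zero
    by (simp add: zero_less_mult_iff, simp only: mult_less_cancel_left_pos)
  then have "0 < k" "k < 1" by simp_all
  then show False by simp
qed

lemma z_zero_pik: "z (pi * of_int k) = 0"
proof -
  have e1: "pi * of_int k = (pi * of_int (k mod 2)) + 2*pi * of_int (k div 2)"
  proof -
    have "k = k mod 2 + 2 * (k div 2)" by simp
    then have "real_of_int k = of_int (k mod 2) + 2 * of_int (k div 2)" by (metis of_int_add of_int_mult of_int_numeral)
    then show ?thesis by (simp add: algebra_simps)
  qed
  have "z (pi * of_int k) = z (pi * of_int (k mod 2) + 2*pi * of_int (k div 2))"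
    by (rule arg_cong[where f=z]) (rule e1)
  also have "\<dots> = z (pi * of_int (k mod 2))" by (rule zper)
  finally have zz: "z (pi * of_int k) = z (pi * of_int (k mod 2))" .
  have "k mod 2 = 0 \<or> k mod 2 = 1" by auto
  then show ?thesis
  proof
    assume "k mod 2 = 0" then show ?thesis using zz z_0 by simp
  next
    assume "k mod 2 = 1" then show ?thesis using zz z_pi by simp
  qed
qed


lemma normalize:
  "\<exists>u0 \<in> {0..pi}. \<exists>\<sigma>::real. (\<sigma> = 1 \<or> \<sigma> = -1) \<and> z u = complex_of_real \<sigma> * z u0 \<and> \<zeta> u = \<zeta> u0 \<and>
      vderiv \<zeta> u = complex_of_real \<sigma> * vderiv \<zeta> u0"
proof -
  define k where "k = \<lfloor>u / (2*pi)\<rfloor>"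
  define u1 where "u1 = u - 2*pi * of_int k"
  have "of_int k \<le> u / (2*pi)" "u / (2*pi) < of_int k + 1" unfolding k_def by linarith+
  then have u1: "0 \<le> u1" "u1 < 2*pi" unfolding u1_def by (auto simp: field_simps)
  have e: "u = u1 + 2*pi * of_int k" unfolding u1_def by simp
  have Pz: "z u = z u1" "\<zeta> u = \<zeta> u1" "vderiv \<zeta> u = vderiv \<zeta> u1"
    unfolding e by (rule zper, rule \<zeta>per, rule periodic_int, rule d\<zeta>_per)
  show ?thesis
  proof (cases "u1 \<le> pi")
    case True then show ?thesis using u1 Pz by (intro bexI[of _ u1] exI[of _ 1]) auto
  next
    case False
    have e2: "u1 = - (2*pi - u1) + 2*pi" by simp
    have "z u1 = - z (2*pi - u1)" by (subst e2, subst scP(1)) (rule scP(8))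
    moreover have "\<zeta> u1 = \<zeta> (2*pi - u1)" by (subst e2, subst scP(2)) (rule scP(9))
    moreover have "vderiv \<zeta> u1 = - vderiv \<zeta> (2*pi - u1)" by (subst e2, subst d\<zeta>_per) (rule d\<zeta>_neg)
    ultimately have "z u1 = - z (2*pi - u1)" "\<zeta> u1 = \<zeta> (2*pi - u1)" "vderiv \<zeta> u1 = - vderiv \<zeta> (2*pi - u1)" by auto
    then show ?thesis using u1 Pz False by (intro bexI[of _ "2*pi - u1"] exI[of _ "-1"]) auto
  qed
qed

lemma G_inj: "u \<in> {0..pi} \<Longrightarrow> v \<in> {0..pi} \<Longrightarrow> (z u)^2 = (z v)^2 \<Longrightarrow> \<zeta> u = \<zeta> v \<Longrightarrow> u = v"
proof -
  assume u: "u \<in> {0..pi}" and v: "v \<in> {0..pi}" and e: "(z u)^2 = (z v)^2" "\<zeta> u = \<zeta> v"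
  from e(1) have "z u = z v \<or> z u = - z v" by (simp add: power2_eq_iff)
  then show "u = v"
  proof
    assume "z u = z v"
    then obtain k :: int where k: "u - v = 2*pi * of_int k" using scP(6) e(2) by blast
    from u v have "-pi \<le> u - v" "u - v \<le> pi" by auto
    with k int_range[of "-pi" k pi] have "-1/2 \<le> (of_int k::real)" "of_int k \<le> (1/2::real)" by auto
    then have "(-1::real) < of_int k" "of_int k < (1::real)" by linarith+
    then have "-1 < k" "k < 1" by simp_all
    then have "k = 0" by simp
    then show ?thesis using k by simp
  next
    assume "z u = - z v"
    then have "z u = z (-v)" "\<zeta> u = \<zeta> (-v)" using scP(8)[of v] scP(9)[of v] e(2) by simp_all
    then obtain k :: int where k0: "u - (-v) = 2*pi * of_int k" using scP(6) by blast
    then have k: "u + v = 2*pi * of_int k" by simp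
    from u v have "0 \<le> u + v" "u + v \<le> 2*pi" by auto
    with k int_range[of 0 k "2*pi"] have "0 \<le> (of_int k::real)" "of_int k \<le> (1::real)" by auto
    then have "0 \<le> k" "k \<le> 1" by simp_all
    then have "k = 0 \<or> k = 1" by auto
    then show ?thesis
    proof
      assume "k = 0" then have "u + v = 0" using k by simp
      then show ?thesis using u v by simp
    next
      assume "k = 1" then have "u + v = 2*pi" using k by simp
      then show ?thesis using u v by simp
    qed
  qed
qed

end


lemma vd_lim:
  fixes c :: "real \<Rightarrow> 'a::real_normed_vector"
  assumes "(c has_vector_derivative v) (at x)"
  shows "((\<lambda>t. (c t - c x) /\<^sub>R (t - x)) \<longlongrightarrow> v) (at x)"
proof -
  have "((\<lambda>y. ((c y - c x) - (y - x) *\<^sub>R v) /\<^sub>R norm (y - x)) \<longlongrightarrow> 0) (at x)"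
    using assms by (simp add: has_vector_derivative_def has_derivative_at_within)
  then have 1: "((\<lambda>y. norm (((c y - c x) - (y - x) *\<^sub>R v) /\<^sub>R norm (y - x))) \<longlongrightarrow> 0) (at x)"
    by (rule tendsto_norm_zero)
  have E: "\<forall>\<^sub>F y in at x. norm (((c y - c x) - (y - x) *\<^sub>R v) /\<^sub>R norm (y - x)) = norm ((c y - c x) /\<^sub>R (y - x) - v)"
    unfolding eventually_at_filter
  proof (rule always_eventually, intro allI impI)
    fix y :: real assume "y \<noteq> x"
    then have "(c y - c x) /\<^sub>R (y - x) - v = inverse (y - x) *\<^sub>R ((c y - c x) - (y - x) *\<^sub>R v)"
      by (simp add: scaleR_diff_right)
    then have "norm ((c y - c x) /\<^sub>R (y - x) - v) = \<bar>inverse (y - x)\<bar> * norm ((c y - c x) - (y - x) *\<^sub>R v)"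
      by simp
    also have "\<dots> = norm (((c y - c x) - (y - x) *\<^sub>R v) /\<^sub>R norm (y - x))"
      by (simp add: abs_inverse divide_inverse)
    finally show "norm (((c y - c x) - (y - x) *\<^sub>R v) /\<^sub>R norm (y - x)) = norm ((c y - c x) /\<^sub>R (y - x) - v)"
      by simp
  qed
  have "((\<lambda>y. norm ((c y - c x) /\<^sub>R (y - x) - v)) \<longlongrightarrow> 0) (at x)"
    by (rule tendsto_cong[OF E, THEN iffD1, OF 1])
  then show ?thesis
    by - (rule LIM_zero_cancel, rule tendsto_norm_zero_cancel, assumption)
qed

lemma Qlemma:
  fixes g :: "real \<Rightarrow> 'a::real_normed_vector"
  assumes "(g has_vector_derivative D) (at u0)"
  shows "\<exists>Q. isCont Q u0 \<and> Q u0 = D \<and> (\<forall>s. g s - g u0 = (s - u0) *\<^sub>R Q s)"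
proof -
  define Q where "Q s = (if s = u0 then D else (g s - g u0) /\<^sub>R (s - u0))" for s
  have E: "\<forall>\<^sub>F y in at u0. (g y - g u0) /\<^sub>R (y - u0) = Q y"
    by (auto simp: Q_def eventually_at_filter)
  have "(Q \<longlongrightarrow> D) (at u0)" by (rule tendsto_cong[OF E, THEN iffD1, OF vd_lim[OF assms]])
  then have "isCont Q u0" by (simp add: isCont_def Q_def)
  moreover have "g s - g u0 = (s - u0) *\<^sub>R Q s" for s by (simp add: Q_def)
  ultimately show ?thesis by (auto simp: Q_def)
qed

lemma realratio:
  fixes Q :: "'c \<Rightarrow> complex" and r :: "'b \<Rightarrow> real"
  assumes F: "F \<noteq> bot" and L: "((\<lambda>t. of_real (r t) * Q (s t)) \<longlongrightarrow> L) F"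
    and Q: "((\<lambda>t. Q (s t)) \<longlongrightarrow> D) F" and D: "D \<noteq> 0"
  shows "L / D = of_real (Re (L / D))"
proof -
  have ev: "\<forall>\<^sub>F t in F. Q (s t) \<noteq> 0" using tendsto_imp_eventually_ne[OF Q D] .
  have T: "((\<lambda>t. of_real (r t) * Q (s t) / Q (s t)) \<longlongrightarrow> L / D) F"
    by (rule tendsto_divide[OF L Q D])
  have E: "\<forall>\<^sub>F t in F. of_real (r t) * Q (s t) / Q (s t) = complex_of_real (r t)"
    using ev by eventually_elim simp
  have 1: "((\<lambda>t. complex_of_real (r t)) \<longlongrightarrow> L / D) F" by (rule tendsto_cong[OF E, THEN iffD1, OF T])
  then have "((\<lambda>t. Re (complex_of_real (r t))) \<longlongrightarrow> Re (L / D)) F" by (rule tendsto_Re)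
  then have "((\<lambda>t. complex_of_real (r t)) \<longlongrightarrow> of_real (Re (L / D))) F" by (simp add: tendsto_of_real)
  with 1 show ?thesis using F tendsto_unique by blast
qed


lemma sumsq: "(x::real^'n) \<in> sphere 0 1 \<Longrightarrow> (\<Sum>i\<in>UNIV. (x$i)^2) = 1"
proof -
  assume "x \<in> sphere 0 1"
  then have "norm x = 1" by simp
  then have "x \<bullet> x = 1" by (simp add: dot_square_norm)
  then show ?thesis by (simp add: inner_vec_def power2_eq_square)
qed

lemma core_alg:
  fixes x :: "real^'n" and v :: "complex^'n" and z0 zp :: complex and a :: real
  assumes x: "(\<Sum>i\<in>UNIV. (x$i)^2) = 1" and z0: "z0 \<noteq> 0"
    and S: "(\<Sum>i\<in>UNIV. of_real (x$i) * v$i) = of_real a * zp"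
    and I: "\<And>i j. Im (z0 * of_real (x$i) * cnj (v$j) + v$i * cnj (z0 * of_real (x$j))) = 0"
  shows "Im ((v$i - of_real a * zp * of_real (x$i)) / z0) = 0"
    and "(\<Sum>i\<in>UNIV. x$i * Re ((v$i - of_real a * zp * of_real (x$i)) / z0)) = 0"
proof -
  define b where "b i = Im (v$i * cnj z0)" for i
  have I': "x$j * b i = x$i * b j" for i j
  proof -
    have "Im (z0 * of_real (x$i) * cnj (v$j) + v$i * cnj (z0 * of_real (x$j))) = x$j * b i - x$i * b j"
      unfolding b_def by (simp add: algebra_simps)
    then show ?thesis using I[of i j] by simp
  qed
  have "b i = (\<Sum>j\<in>UNIV. (x$j)^2) * b i" using x by simp
  also have "\<dots> = (\<Sum>j\<in>UNIV. x$j * (x$j * b i))"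
    by (simp add: sum_distrib_right power2_eq_square mult.assoc)
  also have "\<dots> = (\<Sum>j\<in>UNIV. x$i * (x$j * b j))"
    by (rule sum.cong[OF refl]) (metis I' mult.left_commute)
  also have "\<dots> = x$i * Im ((\<Sum>j\<in>UNIV. of_real (x$j) * v$j) * cnj z0)"
    by (simp add: sum_distrib_left b_def Im_sum sum_distrib_right algebra_simps)
  also have "\<dots> = x$i * a * Im (zp * cnj z0)" using S by (simp add: algebra_simps)
  finally have bi: "b i = x$i * a * Im (zp * cnj z0)" .
  have "Im ((v$i - of_real a * zp * of_real (x$i)) * cnj z0) = 0"
    using bi unfolding b_def by (simp add: algebra_simps)
  moreover have "(v$i - of_real a * zp * of_real (x$i)) / z0 = (v$i - of_real a * zp * of_real (x$i)) * cnj z0 / of_real ((cmod z0)^2)"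
    by (subst complex_div_cnj) simp
  ultimately show "Im ((v$i - of_real a * zp * of_real (x$i)) / z0) = 0"
    by (simp add: Im_divide_of_real)
  define c where "c = of_real a * zp"
  define T where "T i = (v$i - c * of_real (x$i)) / z0" for i
  have "(\<Sum>i\<in>UNIV. x$i * Re ((v$i - c * of_real (x$i)) / z0))
      = Re (\<Sum>i\<in>UNIV. of_real (x$i) * T i)"
    by (simp add: Re_sum T_def[symmetric])
  also have "(\<Sum>i\<in>UNIV. of_real (x$i) * T i) = (\<Sum>i\<in>UNIV. of_real (x$i) * ((v$i - c * of_real (x$i)) / z0))"
    by (simp add: T_def)
  also have "(\<Sum>i\<in>UNIV. of_real (x$i) * ((v$i - c * of_real (x$i)) / z0))
      = (\<Sum>i\<in>UNIV. of_real (x$i) * v$i - c * of_real ((x$i)^2)) / z0"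
    by (simp add: sum_divide_distrib algebra_simps power2_eq_square)
  also have "\<dots> = ((\<Sum>i\<in>UNIV. of_real (x$i) * v$i) - c * of_real (\<Sum>i\<in>UNIV. (x$i)^2)) / z0"
    by (simp add: sum_subtractf sum_distrib_left)
  also have "\<dots> = 0" using S x by (simp add: c_def)
  finally show "(\<Sum>i\<in>UNIV. x$i * Re ((v$i - of_real a * zp * of_real (x$i)) / z0)) = 0" by (simp add: c_def)
qed


lemma in_Lambda: "x \<in> sphere 0 1 \<Longrightarrow> ((\<chi> i. z u * complex_of_real (x $ i)), \<zeta> u) \<in> (Lambda z \<zeta> :: ((complex^'n) \<times> complex) set)"
  unfolding Lambda_def by blast

lemma bl_comp: "bounded_linear (\<lambda>q::(complex^'n) \<times> complex. fst q $ i)"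
  by (rule bounded_linear_compose[OF bounded_linear_vec_nth bounded_linear_fst])

lemma vd_comp:
  fixes c :: "real \<Rightarrow> (complex^'n) \<times> complex"
  assumes "(c has_vector_derivative v) (at t)"
  shows "((\<lambda>t. fst (c t) $ i) has_vector_derivative (fst v $ i)) (at t)"
    and "((\<lambda>t. snd (c t)) has_vector_derivative (snd v)) (at t)"
  using bounded_linear.has_vector_derivative[OF bl_comp assms]
    bounded_linear.has_vector_derivative[OF bounded_linear_snd assms] by auto

context
  fixes f :: "complex poly" and z \<zeta> :: "real \<Rightarrow> complex"
  assumes sc: "symmetric_circle f z \<zeta>"
begin

lemma Lambda_norm:
  assumes "q \<in> (Lambda z \<zeta> :: ((complex^'n) \<times> complex) set)"
  shows "\<exists>u\<in>{0..pi}. \<exists>x\<in>sphere 0 1. q = ((\<chi> i. z u * complex_of_real (x $ i)), \<zeta> u)"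
proof -
  obtain u' and x' :: "real^'n" where q: "q = ((\<chi> i. z u' * complex_of_real (x' $ i)), \<zeta> u')" and x': "x' \<in> sphere 0 1"
    using assms unfolding Lambda_def by blast
  obtain u0 and \<sigma> :: real where u0: "u0 \<in> {0..pi}" "\<sigma> = 1 \<or> \<sigma> = -1" "z u' = complex_of_real \<sigma> * z u0" "\<zeta> u' = \<zeta> u0"
    using normalize[OF sc, of u'] by blast
  have "\<sigma> *\<^sub>R x' \<in> sphere 0 1" using x' u0(2) by auto
  moreover have "q = ((\<chi> i. z u0 * complex_of_real ((\<sigma> *\<^sub>R x') $ i)), \<zeta> u0)"
    unfolding q using u0 by (auto simp: vec_eq_iff)
  ultimately show ?thesis using u0 by blast
qed

lemma tangent_setup:
  assumes v: "v \<in> tangent_vectors (Lambda z \<zeta> :: ((complex^'n) \<times> complex) set) p"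
    and p: "p = ((\<chi> i. z u0 * complex_of_real (x0 $ i)), \<zeta> u0)" and u0: "u0 \<in> {0..pi}"
    and x0: "x0 \<in> sphere 0 1"
  obtains c s X where "c 0 = p" "\<And>t. c t \<in> Lambda z \<zeta>" "(c has_vector_derivative v) (at 0)"
    "\<And>t. s t \<in> {0..pi}" "\<And>t. X t \<in> sphere 0 1"
    "\<And>t. c t = ((\<chi> i. z (s t) * complex_of_real (X t $ i)), \<zeta> (s t))"
    "(s \<longlongrightarrow> u0) (at 0)"
proof -
  obtain c where c: "c 0 = p" "\<And>t. c t \<in> Lambda z \<zeta>" "(c has_vector_derivative v) (at 0)"
    using v unfolding tangent_vectors_def by blast
  have "\<forall>t. \<exists>ux. fst ux \<in> {0..pi} \<and> snd ux \<in> sphere (0::real^'n) 1 \<and>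
      c t = ((\<chi> i. z (fst ux) * complex_of_real (snd ux $ i)), \<zeta> (fst ux))"
    using Lambda_norm[OF c(2)] by fastforce
  then obtain S where S: "\<And>t. fst (S t) \<in> {0..pi} \<and> snd (S t) \<in> sphere (0::real^'n) 1 \<and>
      c t = ((\<chi> i. z (fst (S t)) * complex_of_real (snd (S t) $ i)), \<zeta> (fst (S t)))"
    by metis
  define s where "s t = fst (S t)" for t
  define X where "X t = snd (S t)" for t
  have sX: "\<And>t. s t \<in> {0..pi}" "\<And>t. X t \<in> sphere 0 1"
    "\<And>t. c t = ((\<chi> i. z (s t) * complex_of_real (X t $ i)), \<zeta> (s t))"
    using S unfolding s_def X_def by auto
  define G where "G u = ((z u)^2, \<zeta> u)" for u
  define H where "H q = ((\<Sum>i\<in>UNIV. (fst q $ i)^2), snd q)" for q :: "(complex^'n) \<times> complex"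
  have HG: "H ((\<chi> i. z u * complex_of_real (x $ i)), \<zeta> u) = G u" if "x \<in> sphere 0 1" for u and x :: "real^'n"
  proof -
    have "(\<Sum>i\<in>UNIV. (z u * complex_of_real (x $ i))^2) = (z u)^2 * of_real (\<Sum>i\<in>UNIV. (x$i)^2)"
      by (simp add: power_mult_distrib sum_distrib_left)
    then show ?thesis using sumsq[OF that] by (simp add: H_def G_def)
  qed
  have injG: "inj_on G {0..pi}"
    by (rule inj_onI) (auto simp: G_def intro: G_inj[OF sc])
  have contG: "continuous_on {0..pi} G"
  proof -
    have "continuous_on UNIV z" "continuous_on UNIV \<zeta>"
      using zD[OF sc] \<zeta>D[OF sc] by (auto intro!: continuous_at_imp_continuous_on has_vector_derivative_continuous)
    then show ?thesis unfolding G_def by (auto intro!: continuous_intros elim: continuous_on_subset)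
  qed
  define g where "g = inv_into {0..pi} G"
  have gG: "g (G u) = u" if "u \<in> {0..pi}" for u using injG that by (simp add: g_def)
  have contg: "continuous_on (G ` {0..pi}) g"
    by (rule continuous_on_inv[OF contG compact_Icc]) (simp add: gG)
  have "continuous (at 0) c" by (rule has_vector_derivative_continuous[OF c(3)])
  then have climit: "(c \<longlongrightarrow> c 0) (at 0)" by (simp add: continuous_at)
  have Hlim: "((\<lambda>t. H (c t)) \<longlongrightarrow> H (c 0)) (at 0)"
    unfolding H_def by (intro tendsto_intros climit)
  have Hp: "H (c 0) = G u0" using c(1) p HG x0 by simp
  have "((\<lambda>t. g (H (c t))) \<longlongrightarrow> g (G u0)) (at 0)"
    using continuous_on_tendsto_compose[OF contg Hlim[unfolded Hp]] u0 HG sX by auto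
  moreover have "g (H (c t)) = s t" for t using HG sX gG by metis
  ultimately have "(s \<longlongrightarrow> u0) (at 0)" using gG u0 by simp
  then show ?thesis using that c sX by blast
qed

end


context
  fixes f :: "complex poly" and z \<zeta> :: "real \<Rightarrow> complex"
  assumes sc: "symmetric_circle f z \<zeta>"
begin

lemma inv1:
  fixes c :: "real \<Rightarrow> (complex^'n) \<times> complex" and X :: "real \<Rightarrow> real^'n"
  assumes cD: "(c has_vector_derivative v) (at 0)"
    and cX: "\<And>t. c t = ((\<chi> i. z (s t) * complex_of_real (X t $ i)), \<zeta> (s t))"
    and X: "\<And>t. X t \<in> sphere 0 1"
  shows "(\<Sum>i\<in>UNIV. fst (c 0) $ i * fst v $ i + fst v $ i * fst (c 0) $ i) = snd v * poly (pderiv f) (snd (c 0))"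
proof -
  have eq: "(\<lambda>t. \<Sum>i\<in>UNIV. fst (c t) $ i * fst (c t) $ i) = (\<lambda>t. poly f (snd (c t)))"
  proof
    fix t
    have "(\<Sum>i\<in>UNIV. fst (c t) $ i * fst (c t) $ i) = (z (s t))^2 * of_real (\<Sum>i\<in>UNIV. (X t $ i)^2)"
      by (simp add: cX power2_eq_square sum_distrib_left algebra_simps)
    also have "\<dots> = (z (s t))^2" using sumsq[OF X[of t]] by simp
    also have "\<dots> = poly f (snd (c t))" unfolding cX[of t] snd_conv by (rule scP(5)[OF sc])
    finally show "(\<Sum>i\<in>UNIV. fst (c t) $ i * fst (c t) $ i) = poly f (snd (c t))" .
  qed
  have d1: "((\<lambda>t. \<Sum>i\<in>UNIV. fst (c t) $ i * fst (c t) $ i) has_vector_derivative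
      (\<Sum>i\<in>UNIV. fst (c 0) $ i * fst v $ i + fst v $ i * fst (c 0) $ i)) (at 0)"
    by (intro has_vector_derivative_sum has_vector_derivative_mult vd_comp[OF cD])
  have d2: "((poly f \<circ> (\<lambda>t. snd (c t))) has_vector_derivative (snd v * poly (pderiv f) (snd (c 0)))) (at 0)"
    by (intro field_vector_diff_chain_at vd_comp[OF cD] poly_DERIV)
  have d1': "((\<lambda>t. poly f (snd (c t))) has_vector_derivative
      (\<Sum>i\<in>UNIV. fst (c 0) $ i * fst v $ i + fst v $ i * fst (c 0) $ i)) (at 0)"
    using d1 unfolding eq .
  show ?thesis using vector_derivative_unique_at[OF d1' d2[unfolded o_def]] .
qed

lemma inv2:
  fixes c :: "real \<Rightarrow> (complex^'n) \<times> complex" and X :: "real \<Rightarrow> real^'n"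
  assumes cD: "(c has_vector_derivative v) (at 0)"
    and cX: "\<And>t. c t = ((\<chi> i. z (s t) * complex_of_real (X t $ i)), \<zeta> (s t))"
  shows "Im (fst (c 0) $ i * cnj (fst v $ j) + fst v $ i * cnj (fst (c 0) $ j)) = 0"
proof -
  define P where "P = fst (c 0) $ i * cnj (fst v $ j) + fst v $ i * cnj (fst (c 0) $ j)"
  have eq: "(\<lambda>t. fst (c t) $ i * cnj (fst (c t) $ j) - cnj (fst (c t) $ i) * fst (c t) $ j) = (\<lambda>t. 0)"
    by (rule ext) (simp add: cX algebra_simps)
  have cj: "((\<lambda>t. cnj (fst (c t) $ k)) has_vector_derivative cnj (fst v $ k)) (at 0)" for k
    by (rule bounded_linear.has_vector_derivative[OF bounded_linear_cnj vd_comp(1)[OF cD]])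
  have d1: "((\<lambda>t. fst (c t) $ i * cnj (fst (c t) $ j) - cnj (fst (c t) $ i) * fst (c t) $ j) has_vector_derivative
      ((fst (c 0) $ i * cnj (fst v $ j) + fst v $ i * cnj (fst (c 0) $ j)) -
       (cnj (fst (c 0) $ i) * fst v $ j + cnj (fst v $ i) * fst (c 0) $ j))) (at 0)"
    by (intro has_vector_derivative_diff has_vector_derivative_mult vd_comp[OF cD] cj)
  then have "((\<lambda>t. 0) has_vector_derivative
      ((fst (c 0) $ i * cnj (fst v $ j) + fst v $ i * cnj (fst (c 0) $ j)) -
       (cnj (fst (c 0) $ i) * fst v $ j + cnj (fst v $ i) * fst (c 0) $ j))) (at 0)"
    unfolding eq .
  from vector_derivative_unique_at[OF this has_vector_derivative_const]
  have "P - cnj P = 0" unfolding P_def by (simp add: algebra_simps)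
  then have "P = cnj P" by simp
  then have "Im P = Im (cnj P)" by (rule arg_cong)
  then have "Im P = 0" by simp
  then show ?thesis unfolding P_def .
qed

lemma tangent_A:
  fixes x0 :: "real^'n"
  assumes v: "v \<in> tangent_vectors (Lambda z \<zeta> :: ((complex^'n) \<times> complex) set) p"
    and p: "p = ((\<chi> i. z u0 * complex_of_real (x0 $ i)), \<zeta> u0)" and u0: "u0 \<in> {0..pi}"
    and x0: "x0 \<in> sphere 0 1" and z0: "z u0 \<noteq> 0"
  shows "\<exists>a (y::real^'n). (\<Sum>i\<in>UNIV. x0$i * y$i) = 0 \<and>
     v = ((\<chi> i. of_real a * vderiv z u0 * of_real (x0$i) + z u0 * of_real (y$i)), of_real a * vderiv \<zeta> u0)"
proof -
  obtain c s X where c: "c 0 = p" "\<And>t. c t \<in> Lambda z \<zeta>" "(c has_vector_derivative v) (at 0)"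
    "\<And>t. s t \<in> {0..pi}" "\<And>t. X t \<in> sphere 0 1"
    "\<And>t. c t = ((\<chi> i. z (s t) * complex_of_real (X t $ i)), \<zeta> (s t))"
    "(s \<longlongrightarrow> u0) (at 0)"
    using tangent_setup[OF sc v p u0 x0] by blast
  have ch: "2 * z u0 * vderiv z u0 = poly (pderiv f) (\<zeta> u0) * vderiv \<zeta> u0" by (rule chain[OF sc])
  have dz: "vderiv \<zeta> u0 \<noteq> 0"
  proof
    assume "vderiv \<zeta> u0 = 0"
    then have "vderiv z u0 = 0" using ch z0 by simp
    with \<open>vderiv \<zeta> u0 = 0\<close> show False using scP(7)[OF sc, of u0] by simp
  qed
  obtain Q where Q: "isCont Q u0" "Q u0 = vderiv \<zeta> u0" "\<And>s. \<zeta> s - \<zeta> u0 = (s - u0) *\<^sub>R Q s"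
    using Qlemma[OF \<zeta>D[OF sc]] by blast
  have L: "((\<lambda>t. snd ((c t - c 0) /\<^sub>R (t - 0))) \<longlongrightarrow> snd v) (at 0)"
    by (rule tendsto_snd[OF vd_lim[OF c(3)]])
  have "snd ((c t - c 0) /\<^sub>R (t - 0)) = of_real ((s t - u0) / t) * Q (s t)" for t
  proof -
    have "snd ((c t - c 0) /\<^sub>R (t - 0)) = (\<zeta> (s t) - \<zeta> u0) /\<^sub>R t" using c(1) c(6)[of t] p by simp
    also have "\<dots> = of_real ((s t - u0) / t) * Q (s t)" by (simp add: Q(3) scaleR_conv_of_real divide_inverse)
    finally show ?thesis .
  qed
  with L have L': "((\<lambda>t. of_real ((s t - u0) / t) * Q (s t)) \<longlongrightarrow> snd v) (at 0)" by simp
  have Qs: "((\<lambda>t. Q (s t)) \<longlongrightarrow> vderiv \<zeta> u0) (at 0)"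
    using isCont_tendsto_compose[OF Q(1) c(7)] Q(2) by simp
  define a where "a = Re (snd v / vderiv \<zeta> u0)"
  have "snd v / vderiv \<zeta> u0 = of_real a"
    unfolding a_def by (rule realratio[where F="at 0" and r="\<lambda>t. (s t - u0) / t" and Q=Q and s=s, OF _ L' Qs dz]) simp
  then have sv: "snd v = of_real a * vderiv \<zeta> u0" using dz by (simp add: field_simps)
  have w0: "fst (c 0) $ i = z u0 * of_real (x0 $ i)" for i using c(1) p by simp
  note I1 = inv1[OF c(3) c(6) c(5)]
  have "2 * z u0 * (\<Sum>i\<in>UNIV. of_real (x0$i) * fst v $ i) = (\<Sum>i\<in>UNIV. fst (c 0) $ i * fst v $ i + fst v $ i * fst (c 0) $ i)"
    by (simp add: w0 sum_distrib_left algebra_simps)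
  also have "\<dots> = snd v * poly (pderiv f) (\<zeta> u0)" using I1 c(1) p by simp
  also have "\<dots> = 2 * z u0 * (of_real a * vderiv z u0)" using sv ch by (simp add: algebra_simps)
  finally have S: "(\<Sum>i\<in>UNIV. of_real (x0$i) * fst v $ i) = of_real a * vderiv z u0" using z0 by simp
  have I: "Im (z u0 * of_real (x0$i) * cnj (fst v $ j) + fst v $ i * cnj (z u0 * of_real (x0$j))) = 0" for i j
    using inv2[OF c(3) c(6), of i j] by (simp add: w0)
  note core = core_alg[OF sumsq[OF x0] z0 S I]
  define y where "y = (\<chi> i. Re ((fst v $ i - of_real a * vderiv z u0 * of_real (x0$i)) / z u0))"
  have "fst v $ i = of_real a * vderiv z u0 * of_real (x0$i) + z u0 * of_real (y$i)" for i
  proof -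
    have "(fst v $ i - of_real a * vderiv z u0 * of_real (x0$i)) / z u0 = of_real (y $ i)"
      using core(1)[of i] unfolding y_def by (simp add: complex_eq_iff)
    then show ?thesis using z0 by (simp add: field_simps)
  qed
  then have vv: "v = ((\<chi> i. of_real a * vderiv z u0 * of_real (x0$i) + z u0 * of_real (y$i)), of_real a * vderiv \<zeta> u0)"
    using sv by (simp add: prod_eq_iff vec_eq_iff)
  have oo: "(\<Sum>i\<in>UNIV. x0$i * y$i) = 0" using core(2) unfolding y_def by simp
  show ?thesis by (rule exI[of _ a], rule exI[of _ y], rule conjI[OF oo vv])
qed

end


lemma det_scale_rows:
  fixes B :: "'a::comm_ring_1^'n^'n"
  shows "det (\<chi> i j. s i * B$i$j) = prod s UNIV * det B"
proof -
  have "(\<chi> i j. s i * B$i$j) = (\<chi> i. s i *s B$i)" by (simp add: vec_eq_iff)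
  then show ?thesis using det_rows_mul[of s "\<lambda>i. B$i"] by simp
qed

lemma det_diag:
  fixes A :: "'a::comm_ring_1^'n^'n"
  assumes "\<And>i j. i \<noteq> j \<Longrightarrow> A$i$j = 0"
  shows "det A = (\<Prod>i\<in>UNIV. A$i$i)"
proof -
  have "A = (\<chi> i j. A$i$i * (mat 1 :: 'a^'n^'n)$i$j)"
    using assms by (simp add: vec_eq_iff mat_def)
  then have "det A = (\<Prod>i\<in>UNIV. A$i$i) * det (mat 1 :: 'a^'n^'n)"
    using det_scale_rows[of "\<lambda>i. A$i$i" "mat 1"] by metis
  then show ?thesis by simp
qed

lemma det_of_real:
  fixes A :: "real^'n^'n"
  shows "det (\<chi> i j. complex_of_real (A$i$j)) = complex_of_real (det A)"
  unfolding det_def by (simp add: of_real_sum of_real_mult of_real_prod)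

lemma prod_if_one:
  fixes a b :: "'a::comm_monoid_mult"
  shows "(\<Prod>i\<in>(UNIV::'n::finite set). if i = k then a else b) = a * b ^ (CARD('n) - 1)"
proof -
  have "(\<Prod>i\<in>UNIV. if i = k then a else b) = (if k = k then a else b) * (\<Prod>i\<in>UNIV - {k}. if i = k then a else b)"
    by (rule prod.remove) auto
  also have "(\<Prod>i\<in>UNIV - {k}. if i = k then a else b) = (\<Prod>i\<in>UNIV - {k}. b)"
    by (rule prod.cong) auto
  also have "\<dots> = b ^ (CARD('n) - 1)" by (simp add: card_Diff_singleton)
  finally show ?thesis by simp
qed

definition Nmat :: "real^'n \<Rightarrow> 'n \<Rightarrow> real^'n^'n" where
  "Nmat x k = (\<chi> i j. if j = k then x$i else (if i = j then 1 else 0) - (if i = k then x$j / x$k else 0))"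

lemma Nmat_orth:
  assumes "x$k \<noteq> 0" "j \<noteq> k"
  shows "(\<Sum>i\<in>UNIV. x$i * Nmat x k $ i $ j) = 0"
proof -
  have "(\<Sum>i\<in>UNIV. x$i * Nmat x k $ i $ j) = (\<Sum>i\<in>UNIV. (if i = j then x$i else 0) - (if i = k then x$i * (x$j / x$k) else 0))"
    using assms by (intro sum.cong) (auto simp: Nmat_def)
  also have "\<dots> = x$j - x$k * (x$j / x$k)" by (simp add: sum_subtractf)
  also have "\<dots> = 0" using assms by simp
  finally show ?thesis .
qed

lemma Nmat_det:
  assumes xk: "x$k \<noteq> 0" and x: "(\<Sum>i\<in>UNIV. (x$i)^2) = 1"
  shows "det (Nmat x k) \<noteq> 0"
proof -
  have "inj ((*v) (Nmat x k))"
  proof (rule injI)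
    fix w1 w2 assume "Nmat x k *v w1 = Nmat x k *v w2"
    then have "Nmat x k *v (w1 - w2) = 0" by (simp add: matrix_vector_mult_diff_distrib)
    moreover define w where "w = w1 - w2"
    ultimately have N0: "Nmat x k *v w = 0" by simp
    have comp: "(Nmat x k *v w) $ i = x$i * w$k + (if i = k then - (\<Sum>j\<in>UNIV - {k}. x$j * w$j) / x$k else w$i)" for i
    proof -
      have "(Nmat x k *v w) $ i = (\<Sum>j\<in>UNIV. Nmat x k $ i $ j * w$j)" by (simp add: matrix_vector_mult_def)
      also have "\<dots> = Nmat x k $ i $ k * w$k + (\<Sum>j\<in>UNIV - {k}. Nmat x k $ i $ j * w$j)"
        by (rule sum.remove) auto
      also have "(\<Sum>j\<in>UNIV - {k}. Nmat x k $ i $ j * w$j) = (\<Sum>j\<in>UNIV - {k}. (if i = j then w$j else 0) - (if i = k then x$j * w$j / x$k else 0))"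
        by (rule sum.cong) (auto simp: Nmat_def)
      also have "\<dots> = (if i = k then - (\<Sum>j\<in>UNIV - {k}. x$j * w$j) / x$k else w$i)"
        by (auto simp: sum_subtractf sum_divide_distrib)
      finally show ?thesis by (simp add: Nmat_def)
    qed
    have wi: "w$i = - x$i * w$k" if "i \<noteq> k" for i using comp[of i] N0 that by (simp add: algebra_simps)
    have "0 = x$k * w$k - (\<Sum>j\<in>UNIV - {k}. x$j * w$j) / x$k" using comp[of k] N0 by simp
    also have "(\<Sum>j\<in>UNIV - {k}. x$j * w$j) = - w$k * (\<Sum>j\<in>UNIV - {k}. (x$j)^2)"
      by (simp add: wi sum_distrib_left power2_eq_square algebra_simps flip: sum_negf)
    also have "(\<Sum>j\<in>UNIV - {k}. (x$j)^2) = 1 - (x$k)^2"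
      using x sum.remove[of UNIV k "\<lambda>j. (x$j)^2"] by simp
    finally have "0 = x$k * w$k + w$k * (1 - (x$k)^2) / x$k" by simp
    then have "0 = (x$k * w$k) * x$k + w$k * (1 - (x$k)^2)" using xk by (simp add: field_simps)
    then have wk: "w$k = 0" by (simp add: algebra_simps power2_eq_square)
    have "w = 0" by (simp add: vec_eq_iff) (metis wi wk mult_zero_right)
    then show "w1 = w2" unfolding w_def by simp
  qed
  then have "invertible (Nmat x k)"
    by (simp add: invertible_left_inverse matrix_left_invertible_injective)
  then show ?thesis by (simp add: invertible_det_nz)
qed


lemma Nx_sum:
  assumes xk: "x$k \<noteq> 0" and x: "(\<Sum>i\<in>UNIV. (x$i)^2) = 1"
  shows "(\<Sum>m\<in>UNIV. Nmat x k $ m $ i * x$m) = (if i = k then 1 else 0)"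
proof (cases "i = k")
  case True then show ?thesis using x by (simp add: Nmat_def power2_eq_square)
next
  case False then show ?thesis using Nmat_orth[OF xk False] by (simp add: mult.commute)
qed

lemma scale_of_real:
  fixes R :: "real^'n^'n" and s :: "'n \<Rightarrow> complex"
  assumes "A = (\<chi> i j. s i * complex_of_real (R$i$j))"
  shows "det A = prod s UNIV * of_real (det R)"
proof -
  define B where "B = (\<chi> i j. complex_of_real (R$i$j))"
  have "A = (\<chi> i j. s i * B$i$j)" using assms by (simp add: B_def)
  then have "det A = prod s UNIV * det B" by (simp only: det_scale_rows)
  moreover have "det B = of_real (det R)" unfolding B_def by (rule det_of_real)
  ultimately show ?thesis by simp
qed

lemma detM_all:
  fixes x :: "real^'n" and a :: "'n \<Rightarrow> real" and Y :: "'n \<Rightarrow> real^'n" and zp zz :: complex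
  assumes x: "(\<Sum>i\<in>UNIV. (x$i)^2) = 1" and xk: "x$k \<noteq> 0"
    and orth: "\<And>j. (\<Sum>i\<in>UNIV. x$i * Y j $ i) = 0"
  shows "\<exists>r. det (\<chi> i j. of_real (a j) * zp * of_real (x$i) + zz * of_real (Y j $ i)) = zp * zz^(CARD('n) - 1) * of_real r"
proof -
  define N where "N = Nmat x k"
  define Nc where "Nc = (\<chi> i m. complex_of_real (N $ m $ i))"
  define M where "M = (\<chi> i j. of_real (a j) * zp * of_real (x$i) + zz * of_real (Y j $ i))"
  define R where "R = (\<chi> i l. if i = k then a l else (\<Sum>m\<in>UNIV. N$m$i * Y l $ m))"
  have "(Nc ** M) $ i $ l = (if i = k then zp else zz) * of_real (R$i$l)" for i l
  proof -
    have "(Nc ** M) $ i $ l = (\<Sum>m\<in>UNIV. of_real (N$m$i) * (of_real (a l) * zp * of_real (x$m) + zz * of_real (Y l $ m)))"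
      by (simp add: matrix_matrix_mult_def Nc_def M_def)
    also have "\<dots> = of_real (a l) * zp * of_real (\<Sum>m\<in>UNIV. N$m$i * x$m) + zz * of_real (\<Sum>m\<in>UNIV. N$m$i * Y l $ m)"
      by (simp add: sum.distrib sum_distrib_left algebra_simps)
    also have "\<dots> = (if i = k then zp else zz) * of_real (R$i$l)"
    proof (cases "i = k")
      case True
      have "(\<Sum>m\<in>UNIV. N$m$i * Y l $ m) = 0" using orth[of l] True by (simp add: N_def Nmat_def)
      then show ?thesis using True Nx_sum[OF xk x, of i] by (simp add: R_def N_def)
    next
      case False
      then show ?thesis using Nx_sum[OF xk x, of i] by (simp add: R_def N_def)
    qed
    finally show ?thesis .
  qed
  then have eq: "Nc ** M = (\<chi> i l. (if i = k then zp else zz) * complex_of_real (R$i$l))" by (simp add: vec_eq_iff)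
  have "det Nc * det M = det (Nc ** M)" by (simp add: det_mul)
  also have "\<dots> = (\<Prod>i\<in>UNIV. if i = k then zp else zz) * of_real (det R)" by (rule scale_of_real[OF eq])
  also have "\<dots> = zp * zz^(CARD('n) - 1) * of_real (det R)" by (simp add: prod_if_one)
  finally have e: "det Nc * det M = zp * zz^(CARD('n) - 1) * of_real (det R)" .
  have NcT: "Nc = (\<chi> i j. complex_of_real (transpose N $ i $ j))" by (simp add: Nc_def transpose_def)
  have "det Nc = of_real (det (transpose N))" unfolding NcT by (rule det_of_real)
  then have dNc: "det Nc = of_real (det N)" by (simp only: det_transpose)
  have dN: "det N \<noteq> 0" unfolding N_def by (rule Nmat_det[OF xk x])
  have "det M = zp * zz^(CARD('n) - 1) * of_real (det R / det N)"
    using e dNc dN by (simp add: field_simps)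
  then show ?thesis unfolding M_def by blast
qed

lemma detM'_all:
  fixes k :: "'n::finite" and a :: "'n \<Rightarrow> real" and Y :: "'n \<Rightarrow> real^'n" and zq z0 :: complex
  shows "det (\<chi> i j. if i = k then of_real (a j) * zq else z0 * of_real (Y j $ i)) =
     zq * z0^(CARD('n) - 1) * of_real (det (\<chi> i j. if i = k then a j else Y j $ i))"
proof -
  have "(\<chi> i j. if i = k then of_real (a j) * zq else z0 * of_real (Y j $ i)) =
    (\<chi> i j. (if i = k then zq else z0) * complex_of_real ((\<chi> i j. if i = k then a j else Y j $ i)$i$j))"
    by (simp add: vec_eq_iff)
  from scale_of_real[OF this] show ?thesis by (simp add: prod_if_one)
qed

lemma detM_ex:
  fixes x :: "real^'n" and zp z0 :: complex
  shows "det (\<chi> i j. if j = k then zp * of_real (x$i) else z0 * of_real (Nmat x k $ i $ j)) =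
     zp * z0^(CARD('n) - 1) * of_real (det (Nmat x k))"
proof -
  have T: "transpose (\<chi> i j. if j = k then zp * of_real (x$i) else z0 * of_real (Nmat x k $ i $ j)) =
    (\<chi> i j. (if i = k then zp else z0) * complex_of_real (transpose (Nmat x k) $ i $ j))"
    by (simp add: vec_eq_iff transpose_def Nmat_def)
  have "det (\<chi> i j. if j = k then zp * of_real (x$i) else z0 * of_real (Nmat x k $ i $ j)) =
     det (transpose (\<chi> i j. if j = k then zp * of_real (x$i) else z0 * of_real (Nmat x k $ i $ j)))"
    by (simp only: det_transpose)
  also have "\<dots> = (\<Prod>i\<in>UNIV. if i = k then zp else z0) * of_real (det (transpose (Nmat x k)))"
    by (rule scale_of_real[OF T])
  finally show ?thesis by (simp add: prod_if_one)
qed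

lemma detM'_ex:
  fixes k :: "'n::finite" and zq z0 :: complex
  shows "det (\<chi> i j. if i = k then (if j = k then zq else 0) else (if j = k then 0 else (if i = j then z0 else 0))) =
     zq * z0^(CARD('n) - 1)"
proof -
  have "det (\<chi> i j. if i = k then (if j = k then zq else 0) else (if j = k then 0 else (if i = j then z0 else 0))) =
    (\<Prod>i\<in>UNIV. if i = k then zq else z0)"
    by (subst det_diag) (auto intro!: prod.cong)
  then show ?thesis by (simp add: prod_if_one)
qed

lemma detB:
  fixes Y :: "'n::finite \<Rightarrow> real^'n" and zp :: complex
  shows "det (\<chi> i j. zp * of_real (Y j $ i)) = zp ^ CARD('n) * of_real (det (\<chi> i j. Y j $ i))"
proof -
  have "(\<chi> i j. zp * of_real (Y j $ i)) = (\<chi> i j. (\<lambda>_. zp) i * complex_of_real ((\<chi> i j. Y j $ i)$i$j))"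
    by (simp add: vec_eq_iff)
  from scale_of_real[OF this] show ?thesis by simp
qed


lemma sphere_iff: "(w::real^'n) \<in> sphere 0 1 \<longleftrightarrow> (\<Sum>i\<in>UNIV. (w$i)^2) = 1"
proof -
  have "norm w = sqrt (\<Sum>i\<in>UNIV. (w$i)^2)" by (simp add: norm_eq_sqrt_inner inner_vec_def power2_eq_square)
  then show ?thesis by simp
qed

lemma vec_scaleR_c: "((r *\<^sub>R A)::complex^'n)$i = complex_of_real r * A$i"
  by (subst vector_scaleR_component) (rule scaleR_conv_of_real)

lemma cscaleR: "r *\<^sub>R (w::complex) = complex_of_real r * w"
  by (rule scaleR_conv_of_real)

lemma shift_vd:
  assumes "(g has_vector_derivative D) (at u)"
  shows "((\<lambda>t. g (u + t)) has_vector_derivative D) (at 0)"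
proof -
  have "((\<lambda>t. u + t) has_vector_derivative 1) (at 0)" by (auto intro!: derivative_eq_intros)
  moreover have "(g has_vector_derivative D) (at ((\<lambda>t. u + t) 0))" using assms by simp
  ultimately have "((g \<circ> (\<lambda>t. u + t)) has_vector_derivative 1 *\<^sub>R D) (at 0)" by (rule vector_diff_chain_at)
  then show ?thesis by (simp add: o_def)
qed

lemma tan_scale:
  assumes "v \<in> tangent_vectors L p"
  shows "r *\<^sub>R v \<in> tangent_vectors L p"
proof -
  obtain c where c: "c 0 = p" "\<And>t. c t \<in> L" "(c has_vector_derivative v) (at 0)"
    using assms unfolding tangent_vectors_def by blast
  have "((\<lambda>t. r * t) has_vector_derivative r) (at 0)"
    using has_vector_derivative_mult_right[OF has_vector_derivative_id, of r] by simp
  moreover have "(c has_vector_derivative v) (at ((\<lambda>t. r * t) 0))" using c(3) by simp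
  ultimately have "((c \<circ> (\<lambda>t. r * t)) has_vector_derivative r *\<^sub>R v) (at 0)" by (rule vector_diff_chain_at)
  then show ?thesis unfolding tangent_vectors_def using c by (intro CollectI exI[of _ "c \<circ> (\<lambda>t. r * t)"]) auto
qed

lemma tan_zero: "p \<in> L \<Longrightarrow> 0 \<in> tangent_vectors L p"
  unfolding tangent_vectors_def by (intro CollectI exI[of _ "\<lambda>t. p"]) auto

lemma bl_vec_mult: "bounded_linear (\<lambda>w::complex. (\<chi> i. w * k i) :: complex^'n)"
proof (rule bounded_linearI')
  fix x y :: complex
  show "(\<chi> i. (x + y) * k i) = ((\<chi> i. x * k i) :: complex^'n) + (\<chi> i. y * k i)"
    by (simp add: vec_eq_iff algebra_simps)
next
  fix c :: real and x :: complex
  show "(\<chi> i. (c *\<^sub>R x) * k i) = c *\<^sub>R ((\<chi> i. x * k i) :: complex^'n)"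
    by (simp add: vec_eq_iff)
qed

lemma tan_curve1:
  assumes zD: "\<And>t. (z has_vector_derivative vderiv z t) (at t)"
    and \<zeta>D: "\<And>t. (\<zeta> has_vector_derivative vderiv \<zeta> t) (at t)"
    and x: "x \<in> sphere 0 1"
  shows "((\<chi> i. vderiv z u * of_real (x$i)), vderiv \<zeta> u) \<in>
     tangent_vectors (Lambda z \<zeta> :: ((complex^'n) \<times> complex) set) ((\<chi> i. z u * of_real (x$i)), \<zeta> u)"
proof -
  define c where "c t = (((\<chi> i. z (u + t) * complex_of_real (x$i)) :: complex^'n), \<zeta> (u + t))" for t
  have "((\<lambda>t. ((\<chi> i. z (u + t) * complex_of_real (x$i)) :: complex^'n)) has_vector_derivative
      (\<chi> i. vderiv z u * of_real (x$i))) (at 0)"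
    using bounded_linear.has_vector_derivative[OF bl_vec_mult[of "\<lambda>i. complex_of_real (x$i)"] shift_vd[OF zD[of u]]] by simp
  then have "(c has_vector_derivative ((\<chi> i. vderiv z u * of_real (x$i)), vderiv \<zeta> u)) (at 0)"
    unfolding c_def by (rule has_vector_derivative_Pair[OF _ shift_vd[OF \<zeta>D[of u]]])
  moreover have "c t \<in> Lambda z \<zeta>" for t unfolding c_def by (rule in_Lambda[OF x])
  moreover have "c 0 = ((\<chi> i. z u * of_real (x$i)), \<zeta> u)" by (simp add: c_def)
  ultimately show ?thesis unfolding tangent_vectors_def by blast
qed

lemma tan_curve2_unit:
  fixes x y :: "real^'n"
  assumes x: "x \<in> sphere 0 1" and y: "y \<in> sphere 0 1" and o: "(\<Sum>i\<in>UNIV. x$i * y$i) = 0"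
  shows "((\<chi> i. z u * of_real (y$i)), 0) \<in>
     tangent_vectors (Lambda z \<zeta> :: ((complex^'n) \<times> complex) set) ((\<chi> i. z u * of_real (x$i)), \<zeta> u)"
proof -
  define A where "A = ((\<chi> i. z u * of_real (x$i)) :: complex^'n)"
  define B where "B = ((\<chi> i. z u * of_real (y$i)) :: complex^'n)"
  define c where "c t = (cos t *\<^sub>R A + sin t *\<^sub>R B, \<zeta> u)" for t
  have "((\<lambda>t. cos t *\<^sub>R A + sin t *\<^sub>R B) has_vector_derivative
      ((cos 0 *\<^sub>R 0 + (- sin 0) *\<^sub>R A) + (sin 0 *\<^sub>R 0 + cos 0 *\<^sub>R B))) (at 0)"
    by (intro has_vector_derivative_add has_vector_derivative_scaleR has_vector_derivative_const DERIV_sin DERIV_cos)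
  then have "((\<lambda>t. cos t *\<^sub>R A + sin t *\<^sub>R B) has_vector_derivative B) (at 0)" by simp
  then have "(c has_vector_derivative (B, 0)) (at 0)"
    unfolding c_def by (intro has_vector_derivative_Pair has_vector_derivative_const)
  moreover have "c t \<in> Lambda z \<zeta>" for t
  proof -
    have "(\<Sum>i\<in>UNIV. ((cos t *\<^sub>R x + sin t *\<^sub>R y) $ i)^2)
       = (cos t)^2 * (\<Sum>i\<in>UNIV. (x$i)^2) + (sin t)^2 * (\<Sum>i\<in>UNIV. (y$i)^2) + 2 * cos t * sin t * (\<Sum>i\<in>UNIV. x$i * y$i)"
      by (simp add: power2_eq_square sum.distrib sum_distrib_left algebra_simps)
    also have "\<dots> = 1" using x y o unfolding sphere_iff by simp
    finally have s: "cos t *\<^sub>R x + sin t *\<^sub>R y \<in> sphere 0 1" unfolding sphere_iff by simp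
    have "c t = ((\<chi> i. z u * of_real ((cos t *\<^sub>R x + sin t *\<^sub>R y) $ i)), \<zeta> u)"
      by (simp add: c_def A_def B_def vec_eq_iff cscaleR algebra_simps)
    then show ?thesis using in_Lambda[OF s] by simp
  qed
  moreover have "c 0 = ((\<chi> i. z u * of_real (x$i)), \<zeta> u)" by (simp add: c_def A_def)
  ultimately show ?thesis unfolding tangent_vectors_def B_def by blast
qed

lemma tan_curve2:
  fixes x y :: "real^'n"
  assumes x: "x \<in> sphere 0 1" and o: "(\<Sum>i\<in>UNIV. x$i * y$i) = 0"
  shows "((\<chi> i. z u * of_real (y$i)), 0) \<in>
     tangent_vectors (Lambda z \<zeta> :: ((complex^'n) \<times> complex) set) ((\<chi> i. z u * of_real (x$i)), \<zeta> u)"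
proof (cases "y = 0")
  case True
  then have e: "((\<chi> i. z u * of_real (y$i)), 0) = (0 :: (complex^'n) \<times> complex)"
    by (simp add: vec_eq_iff zero_prod_def)
  show ?thesis unfolding e by (rule tan_zero[OF in_Lambda[OF x]])
next
  case False
  define y1 where "y1 = (1 / norm y) *\<^sub>R y"
  have y1: "y1 \<in> sphere 0 1" using False by (simp add: y1_def)
  have o1: "(\<Sum>i\<in>UNIV. x$i * y1$i) = 0" using o by (simp add: y1_def sum_divide_distrib[symmetric])
  have "norm y *\<^sub>R ((\<chi> i. z u * of_real (y1$i)), (0::complex)) \<in> tangent_vectors (Lambda z \<zeta>) ((\<chi> i. z u * of_real (x$i)), \<zeta> u)"
    by (rule tan_scale[OF tan_curve2_unit[OF x y1 o1]])
  moreover have "norm y *\<^sub>R ((\<chi> i. z u * of_real (y1$i)), (0::complex)) = ((\<chi> i. z u * of_real (y$i)), 0)"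
    using False by (simp add: y1_def vec_eq_iff cscaleR)
  ultimately show ?thesis by simp
qed

lemma kahler_A:
  fixes x y y' :: "real^'n" and a b :: real and zp z0 zq :: complex
  assumes "(\<Sum>i\<in>UNIV. x$i * y$i) = 0" "(\<Sum>i\<in>UNIV. x$i * y'$i) = 0"
  shows "kahler_form (((\<chi> i. of_real a * zp * of_real (x$i) + z0 * of_real (y$i)) :: complex^'n), of_real a * zq)
                     (((\<chi> i. of_real b * zp * of_real (x$i) + z0 * of_real (y'$i)) :: complex^'n), of_real b * zq) = 0"
proof -
  have t: "Im (cnj (of_real a * zp * of_real (x$i) + z0 * of_real (y$i)) * (of_real b * zp * of_real (x$i) + z0 * of_real (y'$i)))
     = (x$i * y'$i) * (a * Im (cnj zp * z0)) + (x$i * y$i) * (b * Im (cnj z0 * zp))" for i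
    by (simp add: algebra_simps)
  have "(\<Sum>i\<in>UNIV. Im (cnj (of_real a * zp * of_real (x$i) + z0 * of_real (y$i)) * (of_real b * zp * of_real (x$i) + z0 * of_real (y'$i))))
     = (\<Sum>i\<in>UNIV. x$i * y'$i) * (a * Im (cnj zp * z0)) + (\<Sum>i\<in>UNIV. x$i * y$i) * (b * Im (cnj z0 * zp))"
    unfolding t by (simp add: sum.distrib sum_distrib_right)
  also have "\<dots> = 0" using assms by simp
  finally show ?thesis unfolding kahler_form_def by (simp add: algebra_simps)
qed

lemma kahler_B:
  fixes y y' :: "real^'n" and zp :: complex
  shows "kahler_form (((\<chi> i. zp * of_real (y$i)) :: complex^'n), 0) (((\<chi> i. zp * of_real (y'$i)) :: complex^'n), 0) = 0"
  unfolding kahler_form_def by (simp add: algebra_simps)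


lemma powi_rel:
  fixes z0 :: complex
  assumes "z0 \<noteq> 0"
  shows "z0 ^ (CARD('n::finite) - 1) = z0 powi (int CARD('n) - 2) * z0"
proof -
  have c: "CARD('n) \<ge> 1" using zero_less_card_finite[where 'a='n] by linarith
  have "z0 powi (int CARD('n) - 2) * z0 = z0 powi ((int CARD('n) - 1) - 1) * z0" by simp
  also have "\<dots> = z0 powi (int CARD('n) - 1)" using assms by (rule power_int_minus_mult[OF disjI1])
  also have "int CARD('n) - 1 = int (CARD('n) - 1)" using c by simp
  also have "z0 powi (int (CARD('n) - 1)) = z0 ^ (CARD('n) - 1)" by (rule power_int_of_nat)
  finally show ?thesis by simp
qed

lemma notin_iR: "w \<notin> range (\<lambda>r. \<i> * complex_of_real r) \<longleftrightarrow> Re w \<noteq> 0"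
proof
  assume "w \<notin> range (\<lambda>r. \<i> * complex_of_real r)"
  then have "w \<noteq> \<i> * complex_of_real (Im w)" by blast
  then show "Re w \<noteq> 0" by (auto simp: complex_eq_iff)
next
  assume "Re w \<noteq> 0" then show "w \<notin> range (\<lambda>r. \<i> * complex_of_real r)" by auto
qed

context
  fixes f :: "complex poly" and z \<zeta> :: "real \<Rightarrow> complex"
  assumes sc: "symmetric_circle f z \<zeta>" and sz: "simple_zeros f"
begin

lemma fnz: "z u = 0 \<Longrightarrow> poly (pderiv f) (\<zeta> u) \<noteq> 0"
  using sz scP(5)[OF sc, of u] unfolding simple_zeros_def by simp

lemma u0_0pi: "u0 \<in> {0..pi} \<Longrightarrow> z u0 = 0 \<Longrightarrow> u0 \<in> {0, pi}"
  using z_nz[OF sc, of u0] by force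

lemma tangent_B:
  fixes x0 :: "real^'n"
  assumes v: "v \<in> tangent_vectors (Lambda z \<zeta> :: ((complex^'n) \<times> complex) set) p"
    and p: "p = ((\<chi> i. z u0 * complex_of_real (x0 $ i)), \<zeta> u0)" and u0: "u0 \<in> {0..pi}"
    and x0: "x0 \<in> sphere 0 1" and z0: "z u0 = 0"
  shows "\<exists>y::real^'n. v = ((\<chi> i. vderiv z u0 * of_real (y$i)), 0)"
proof -
  obtain c s X where c: "c 0 = p" "\<And>t. c t \<in> Lambda z \<zeta>" "(c has_vector_derivative v) (at 0)"
    "\<And>t. s t \<in> {0..pi}" "\<And>t. X t \<in> sphere 0 1"
    "\<And>t. c t = ((\<chi> i. z (s t) * complex_of_real (X t $ i)), \<zeta> (s t))"
    "(s \<longlongrightarrow> u0) (at 0)"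
    using tangent_setup[OF sc v p u0 x0] by blast
  have dz: "vderiv z u0 \<noteq> 0" by (rule dz_0pi[OF sc u0_0pi[OF u0 z0]])
  have w0: "fst (c 0) $ i = 0" for i using c(1) p z0 by simp
  have "snd v * poly (pderiv f) (snd (c 0)) = 0" using inv1[OF sc c(3) c(6) c(5)] w0 by simp
  then have sv: "snd v = 0" using fnz[OF z0] c(1) p by simp
  obtain Q where Q: "isCont Q u0" "Q u0 = vderiv z u0" "\<And>s. z s - z u0 = (s - u0) *\<^sub>R Q s"
    using Qlemma[OF zD[OF sc]] by blast
  have Qs: "((\<lambda>t. Q (s t)) \<longlongrightarrow> vderiv z u0) (at 0)"
    using isCont_tendsto_compose[OF Q(1) c(7)] Q(2) by simp
  define y where "y = (\<chi> i. Re (fst v $ i / vderiv z u0))"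
  have "fst v $ i = vderiv z u0 * of_real (y$i)" for i
  proof -
    have L: "((\<lambda>t. fst ((c t - c 0) /\<^sub>R (t - 0)) $ i) \<longlongrightarrow> fst v $ i) (at 0)"
      by (rule tendsto_vec_nth[OF tendsto_fst[OF vd_lim[OF c(3)]]])
    have "fst ((c t - c 0) /\<^sub>R (t - 0)) $ i = of_real ((s t - u0) / t * X t $ i) * Q (s t)" for t
    proof -
      have zs: "z (s t) = of_real (s t - u0) * Q (s t)" using Q(3)[of "s t"] z0 by (simp add: scaleR_conv_of_real)
      have "fst ((c t - c 0) /\<^sub>R (t - 0)) $ i = inverse t *\<^sub>R (z (s t) * of_real (X t $ i))"
        using c(6)[of t] w0[of i] by simp
      also have "\<dots> = of_real ((s t - u0) / t * X t $ i) * Q (s t)"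
        unfolding zs by (simp add: cscaleR divide_inverse)
      finally show ?thesis .
    qed
    with L have L': "((\<lambda>t. of_real ((s t - u0) / t * X t $ i) * Q (s t)) \<longlongrightarrow> fst v $ i) (at 0)" by simp
    have "fst v $ i / vderiv z u0 = of_real (y $ i)" unfolding y_def
      by (simp, rule realratio[where F="at 0" and r="\<lambda>t. (s t - u0) / t * X t $ i" and Q=Q and s=s, OF _ L' Qs dz]) simp
    then show ?thesis using dz by (simp add: field_simps)
  qed
  then have "v = ((\<chi> i. vderiv z u0 * of_real (y$i)), 0)" using sv by (simp add: prod_eq_iff vec_eq_iff)
  then show ?thesis by blast
qed

end


context
  fixes f :: "complex poly" and z \<zeta> :: "real \<Rightarrow> complex"
  assumes sc: "symmetric_circle f z \<zeta>" and sz: "simple_zeros f"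
begin

lemma exk: "(x0::real^'n) \<in> sphere 0 1 \<Longrightarrow> \<exists>k. x0$k \<noteq> 0"
proof (rule ccontr)
  assume a: "x0 \<in> sphere 0 1" "\<not> (\<exists>k. x0$k \<noteq> 0)"
  have "(\<Sum>i\<in>UNIV. (x0$i)^2) = 1" using sumsq[OF a(1)] .
  moreover have "\<And>i. x0$i = 0" using a(2) by blast
  ultimately show False by simp
qed

lemma kchoice:
  fixes x0 :: "real^'n"
  assumes p: "p = ((\<chi> i. z u0 * complex_of_real (x0 $ i)), \<zeta> u0)" and x0: "x0 \<in> sphere 0 1" and z0: "z u0 \<noteq> 0"
  shows "fst p $ (SOME k. fst p $ k \<noteq> 0) \<noteq> 0" "x0 $ (SOME k. fst p $ k \<noteq> 0) \<noteq> 0"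
proof -
  obtain k where "x0$k \<noteq> 0" using exk[OF x0] by blast
  then have "\<exists>k. fst p $ k \<noteq> 0" using p z0 by (intro exI[of _ k]) simp
  then show 1: "fst p $ (SOME k. fst p $ k \<noteq> 0) \<noteq> 0" by (rule someI_ex)
  define K where "K = (SOME k. fst p $ k \<noteq> 0)"
  have "fst p $ K = z u0 * of_real (x0 $ K)" using p by simp
  with 1 show "x0 $ (SOME k. fst p $ k \<noteq> 0) \<noteq> 0" unfolding K_def[symmetric] by auto
qed

lemma PA_all:
  fixes x0 :: "real^'n"
  assumes p: "p = ((\<chi> i. z u0 * complex_of_real (x0 $ i)), \<zeta> u0)" and u0: "u0 \<in> {0..pi}"
    and x0: "x0 \<in> sphere 0 1" and z0: "z u0 \<noteq> 0"
    and v: "\<And>j. v j \<in> tangent_vectors (Lambda z \<zeta> :: ((complex^'n) \<times> complex) set) p"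
  shows "\<exists>r. Omega f p v = of_real r * (vderiv \<zeta> u0 * z u0 powi (int CARD('n) - 2) / 2)"
proof -
  have "\<forall>j. \<exists>ay. (\<Sum>i\<in>UNIV. x0$i * (snd ay :: real^'n)$i) = 0 \<and>
     v j = ((\<chi> i. of_real (fst ay) * vderiv z u0 * of_real (x0$i) + z u0 * of_real (snd ay $ i)), of_real (fst ay) * vderiv \<zeta> u0)"
  proof
    fix j
    obtain a y where "(\<Sum>i\<in>UNIV. x0$i * (y :: real^'n)$i) = 0 \<and>
     v j = ((\<chi> i. of_real a * vderiv z u0 * of_real (x0$i) + z u0 * of_real (y $ i)), of_real a * vderiv \<zeta> u0)"
      using tangent_A[OF sc v p u0 x0 z0] by blast
    then show "\<exists>ay. (\<Sum>i\<in>UNIV. x0$i * (snd ay :: real^'n)$i) = 0 \<and>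
     v j = ((\<chi> i. of_real (fst ay) * vderiv z u0 * of_real (x0$i) + z u0 * of_real (snd ay $ i)), of_real (fst ay) * vderiv \<zeta> u0)"
      by (intro exI[of _ "(a, y)"]) simp
  qed
  then obtain F where F0: "\<forall>j. (\<Sum>i\<in>UNIV. x0$i * (snd (F j) :: real^'n)$i) = 0 \<and>
     v j = ((\<chi> i. of_real (fst (F j)) * vderiv z u0 * of_real (x0$i) + z u0 * of_real (snd (F j) $ i)), of_real (fst (F j)) * vderiv \<zeta> u0)"
    by (rule choice[THEN exE])
  note F = spec[OF F0]
  define a where "a j = fst (F j)" for j
  define Y where "Y j = snd (F j)" for j
  have orth: "\<And>j. (\<Sum>i\<in>UNIV. x0$i * Y j $ i) = 0" and vj: "\<And>j. v j = ((\<chi> i. of_real (a j) * vderiv z u0 * of_real (x0$i) + z u0 * of_real (Y j $ i)), of_real (a j) * vderiv \<zeta> u0)"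
    using F unfolding a_def Y_def by auto
  define k where "k = (SOME k. fst p $ k \<noteq> 0)"
  have pk: "fst p $ k \<noteq> 0" and xk: "x0 $ k \<noteq> 0" using kchoice[OF p x0 z0] unfolding k_def by auto
  have ch: "2 * z u0 * vderiv z u0 = poly (pderiv f) (\<zeta> u0) * vderiv \<zeta> u0" by (rule chain[OF sc])
  have pw: "z u0 ^ (CARD('n) - 1) = z u0 powi (int CARD('n) - 2) * z u0" by (rule powi_rel[OF z0])
  show ?thesis
  proof (cases "poly (pderiv f) (\<zeta> u0) = 0")
    case False
    have "(\<chi> i j. fst (v j) $ i) = (\<chi> i j. of_real (a j) * vderiv z u0 * of_real (x0$i) + z u0 * of_real (Y j $ i))"
      by (simp add: vj)
    moreover obtain r where r: "det (\<chi> i j. of_real (a j) * vderiv z u0 * of_real (x0$i) + z u0 * of_real (Y j $ i))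
        = vderiv z u0 * z u0 ^ (CARD('n) - 1) * of_real r"
      using detM_all[where a=a and Y=Y and zp="vderiv z u0" and zz="z u0", OF sumsq[OF x0] xk orth] by blast
    ultimately have "Omega f p v = vderiv z u0 * z u0 ^ (CARD('n) - 1) * of_real r / poly (pderiv f) (\<zeta> u0)"
      using False p by (simp add: Omega_def)
    also have "\<dots> = of_real r * (vderiv \<zeta> u0 * z u0 powi (int CARD('n) - 2) / 2)"
      using False ch unfolding pw by (simp add: field_simps)
    finally show ?thesis by blast
  next
    case True
    then have dz: "vderiv z u0 = 0" using ch z0 by simp
    have "(\<chi> i j. if i = k then snd (v j) else fst (v j) $ i) =
        (\<chi> i j. if i = k then of_real (a j) * vderiv \<zeta> u0 else z u0 * of_real (Y j $ i))"
      by (simp add: vec_eq_iff vj dz)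
    then have "det (\<chi> i j. if i = k then snd (v j) else fst (v j) $ i) =
       vderiv \<zeta> u0 * z u0^(CARD('n) - 1) * of_real (det (\<chi> i j. if i = k then a j else Y j $ i))"
      by (simp add: detM'_all)
    then have "Omega f p v = vderiv \<zeta> u0 * z u0^(CARD('n) - 1) * of_real (det (\<chi> i j. if i = k then a j else Y j $ i))
        / (2 * (z u0 * of_real (x0 $ k)))"
      using True p unfolding Omega_def Let_def k_def[symmetric] by simp
    also have "\<dots> = of_real (det (\<chi> i j. if i = k then a j else Y j $ i) / x0 $ k) * (vderiv \<zeta> u0 * z u0 powi (int CARD('n) - 2) / 2)"
      using z0 xk unfolding pw by (simp add: field_simps)
    finally show ?thesis by blast
  qed
qed

lemma PA_ex:
  fixes x0 :: "real^'n"
  assumes p: "p = ((\<chi> i. z u0 * complex_of_real (x0 $ i)), \<zeta> u0)" and u0: "u0 \<in> {0..pi}"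
    and x0: "x0 \<in> sphere 0 1" and z0: "z u0 \<noteq> 0"
  shows "\<exists>v. (\<forall>j. v j \<in> tangent_vectors (Lambda z \<zeta> :: ((complex^'n) \<times> complex) set) p) \<and>
     (\<exists>r. r \<noteq> 0 \<and> Omega f p v = of_real r * (vderiv \<zeta> u0 * z u0 powi (int CARD('n) - 2) / 2))"
proof -
  define k where "k = (SOME k. fst p $ k \<noteq> 0)"
  have pk: "fst p $ k \<noteq> 0" and xk: "x0 $ k \<noteq> 0" using kchoice[OF p x0 z0] unfolding k_def by auto
  define N where "N = Nmat x0 k"
  define v where "v j = (if j = k then ((\<chi> i. vderiv z u0 * of_real (x0$i)), vderiv \<zeta> u0)
      else ((\<chi> i. z u0 * of_real (N $ i $ j)), 0))" for j
  have tv: "v j \<in> tangent_vectors (Lambda z \<zeta> :: ((complex^'n) \<times> complex) set) p" for j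
  proof (cases "j = k")
    case True
    then show ?thesis unfolding v_def p using tan_curve1[OF zD[OF sc] \<zeta>D[OF sc] x0] by simp
  next
    case False
    have o: "(\<Sum>i\<in>UNIV. x0$i * (\<chi> i. N $ i $ j) $ i) = 0" using Nmat_orth[OF xk False] by (simp add: N_def)
    show ?thesis using False tan_curve2[OF x0 o, of z u0 \<zeta>] unfolding v_def p by simp
  qed
  have ch: "2 * z u0 * vderiv z u0 = poly (pderiv f) (\<zeta> u0) * vderiv \<zeta> u0" by (rule chain[OF sc])
  have pw: "z u0 ^ (CARD('n) - 1) = z u0 powi (int CARD('n) - 2) * z u0" by (rule powi_rel[OF z0])
  have dN: "det N \<noteq> 0" unfolding N_def by (rule Nmat_det[OF xk sumsq[OF x0]])
  show ?thesis
  proof (cases "poly (pderiv f) (\<zeta> u0) = 0")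
    case False
    have "(\<chi> i j. fst (v j) $ i) = (\<chi> i j. if j = k then vderiv z u0 * of_real (x0$i) else z u0 * of_real (Nmat x0 k $ i $ j))"
      by (simp add: vec_eq_iff v_def N_def)
    then have "det (\<chi> i j. fst (v j) $ i) = vderiv z u0 * z u0^(CARD('n) - 1) * of_real (det N)"
      by (simp add: detM_ex N_def)
    then have "Omega f p v = vderiv z u0 * z u0^(CARD('n) - 1) * of_real (det N) / poly (pderiv f) (\<zeta> u0)"
      using False p by (simp add: Omega_def)
    also have "\<dots> = of_real (det N) * (vderiv \<zeta> u0 * z u0 powi (int CARD('n) - 2) / 2)"
      using False ch unfolding pw by (simp add: field_simps)
    finally show ?thesis using tv dN by blast
  next
    case True
    then have dz: "vderiv z u0 = 0" using ch z0 by simp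
    have "(\<chi> i j. if i = k then snd (v j) else fst (v j) $ i) =
       (\<chi> i j. if i = k then (if j = k then vderiv \<zeta> u0 else 0) else (if j = k then 0 else (if i = j then z u0 else 0)))"
      by (simp add: vec_eq_iff v_def N_def Nmat_def dz)
    then have "det (\<chi> i j. if i = k then snd (v j) else fst (v j) $ i) = vderiv \<zeta> u0 * z u0^(CARD('n) - 1)"
      by (simp add: detM'_ex)
    then have "Omega f p v = vderiv \<zeta> u0 * z u0^(CARD('n) - 1) / (2 * (z u0 * of_real (x0 $ k)))"
      using True p unfolding Omega_def Let_def k_def[symmetric] by simp
    also have "\<dots> = of_real (1 / x0 $ k) * (vderiv \<zeta> u0 * z u0 powi (int CARD('n) - 2) / 2)"
      using z0 xk unfolding pw by (simp add: field_simps)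
    finally show ?thesis using tv xk by (intro exI[of _ v] conjI allI exI[of _ "1 / x0 $ k"]) auto
  qed
qed

lemma PA_iso:
  fixes x0 :: "real^'n"
  assumes p: "p = ((\<chi> i. z u0 * complex_of_real (x0 $ i)), \<zeta> u0)" and u0: "u0 \<in> {0..pi}"
    and x0: "x0 \<in> sphere 0 1" and z0: "z u0 \<noteq> 0"
    and v: "v \<in> tangent_vectors (Lambda z \<zeta> :: ((complex^'n) \<times> complex) set) p"
    and w: "w \<in> tangent_vectors (Lambda z \<zeta> :: ((complex^'n) \<times> complex) set) p"
  shows "kahler_form v w = 0"
proof -
  obtain a y where y: "(\<Sum>i\<in>UNIV. x0$i * y$i) = 0" and vv: "v = ((\<chi> i. of_real a * vderiv z u0 * of_real (x0$i) + z u0 * of_real (y$i)), of_real a * vderiv \<zeta> u0)"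
    using tangent_A[OF sc v p u0 x0 z0] by blast
  obtain b y' where y': "(\<Sum>i\<in>UNIV. x0$i * y'$i) = 0" and ww: "w = ((\<chi> i. of_real b * vderiv z u0 * of_real (x0$i) + z u0 * of_real (y'$i)), of_real b * vderiv \<zeta> u0)"
    using tangent_A[OF sc w p u0 x0 z0] by blast
  show ?thesis unfolding vv ww by (rule kahler_A[OF y y'])
qed

lemma PB_all:
  fixes x0 :: "real^'n"
  assumes p: "p = ((\<chi> i. z u0 * complex_of_real (x0 $ i)), \<zeta> u0)" and u0: "u0 \<in> {0..pi}"
    and x0: "x0 \<in> sphere 0 1" and z0: "z u0 = 0"
    and v: "\<And>j. v j \<in> tangent_vectors (Lambda z \<zeta> :: ((complex^'n) \<times> complex) set) p"
  shows "\<exists>r. Omega f p v = of_real r * (vderiv z u0 ^ CARD('n) / poly (pderiv f) (\<zeta> u0))"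
proof -
  have "\<forall>j. \<exists>y::real^'n. v j = ((\<chi> i. vderiv z u0 * of_real (y$i)), 0)"
    using tangent_B[OF sc sz v p u0 x0 z0] by blast
  then obtain Y where Y0: "\<forall>j. v j = ((\<chi> i. vderiv z u0 * of_real ((Y j :: real^'n)$i)), 0)"
    by (rule choice[THEN exE])
  note Y = spec[OF Y0]
  have "(\<chi> i j. fst (v j) $ i) = (\<chi> i j. vderiv z u0 * of_real (Y j $ i))" by (simp add: Y)
  then have "det (\<chi> i j. fst (v j) $ i) = vderiv z u0 ^ CARD('n) * of_real (det (\<chi> i j. Y j $ i))"
    by (simp add: detB)
  then have "Omega f p v = vderiv z u0 ^ CARD('n) * of_real (det (\<chi> i j. Y j $ i)) / poly (pderiv f) (\<zeta> u0)"
    using fnz[OF sc sz z0] p by (simp add: Omega_def)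
  then show ?thesis by (intro exI[of _ "det (\<chi> i j. Y j $ i)"]) simp
qed

lemma PB_ex:
  fixes x0 :: "real^'n"
  assumes p: "p = ((\<chi> i. z u0 * complex_of_real (x0 $ i)), \<zeta> u0)" and u0: "u0 \<in> {0..pi}"
    and x0: "x0 \<in> sphere 0 1" and z0: "z u0 = 0"
  shows "\<exists>v. (\<forall>j. v j \<in> tangent_vectors (Lambda z \<zeta> :: ((complex^'n) \<times> complex) set) p) \<and>
     Omega f p v = vderiv z u0 ^ CARD('n) / poly (pderiv f) (\<zeta> u0)"
proof -
  define v where "v j = (((\<chi> i. vderiv z u0 * of_real (axis j 1 $ i)) :: complex^'n), (0::complex))" for j
  have d\<zeta>: "vderiv \<zeta> u0 = 0" using u0_0pi[OF sc sz u0 z0] d\<zeta>_0[OF sc] d\<zeta>_pi[OF sc] by auto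
  have tv: "v j \<in> tangent_vectors (Lambda z \<zeta> :: ((complex^'n) \<times> complex) set) p" for j
  proof -
    have a: "axis j (1::real) \<in> sphere 0 1" by simp
    have "p = ((\<chi> i. z u0 * of_real (axis j 1 $ i)), \<zeta> u0)" using p z0 by simp
    then show ?thesis using tan_curve1[OF zD[OF sc] \<zeta>D[OF sc] a, of u0] d\<zeta> unfolding v_def by simp
  qed
  have m: "(\<chi> i j. axis j (1::real) $ i) = mat 1" by (simp add: vec_eq_iff axis_def mat_def)
  have "(\<chi> i j. fst (v j) $ i) = (\<chi> i j. vderiv z u0 * of_real (axis j 1 $ i))" by (simp add: v_def)
  then have "det (\<chi> i j. fst (v j) $ i) = vderiv z u0 ^ CARD('n)"
    by (simp add: detB m)
  then have "Omega f p v = vderiv z u0 ^ CARD('n) / poly (pderiv f) (\<zeta> u0)"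
    using fnz[OF sc sz z0] p by (simp add: Omega_def)
  then show ?thesis using tv by blast
qed

lemma PB_iso:
  fixes x0 :: "real^'n"
  assumes p: "p = ((\<chi> i. z u0 * complex_of_real (x0 $ i)), \<zeta> u0)" and u0: "u0 \<in> {0..pi}"
    and x0: "x0 \<in> sphere 0 1" and z0: "z u0 = 0"
    and v: "v \<in> tangent_vectors (Lambda z \<zeta> :: ((complex^'n) \<times> complex) set) p"
    and w: "w \<in> tangent_vectors (Lambda z \<zeta> :: ((complex^'n) \<times> complex) set) p"
  shows "kahler_form v w = 0"
proof -
  obtain y where vv: "v = ((\<chi> i. vderiv z u0 * of_real (y$i)), 0)"
    using tangent_B[OF sc sz v p u0 x0 z0] by blast
  obtain y' where ww: "w = ((\<chi> i. vderiv z u0 * of_real (y'$i)), 0)"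
    using tangent_B[OF sc sz w p u0 x0 z0] by blast
  show ?thesis unfolding vv ww by (rule kahler_B)
qed

end


theorem lemma3p11:
  fixes f :: "complex poly" and z \<zeta> :: "real \<Rightarrow> complex"
  assumes "simple_zeros f"
    and "symmetric_circle f z \<zeta>"
  shows "positive_lagrangian f (Lambda z \<zeta> :: ((complex^'n) \<times> complex) set) \<longleftrightarrow>
    ((\<forall>u. (\<forall>k::int. u \<noteq> pi * of_int k) \<longrightarrow>
        vderiv \<zeta> u * (z u) powi (int CARD('n) - 2) / 2 \<notin> range (\<lambda>r. \<i> * complex_of_real r)) \<and>
     (\<forall>u\<in>{0, pi}.
        (vderiv z u) ^ CARD('n) / poly (pderiv f) (\<zeta> u) \<notin> range (\<lambda>r. \<i> * complex_of_real r)))"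
proof -
  note sz = assms(1) and sc = assms(2)
  let ?L = "Lambda z \<zeta> :: ((complex^'n) \<times> complex) set"
  show ?thesis
  proof
    assume PL: "positive_lagrangian f ?L"
    then have pos: "\<And>p. p \<in> ?L \<Longrightarrow> \<exists>v. (\<forall>j. v j \<in> tangent_vectors ?L p) \<and> Re (Omega f p v) \<noteq> 0"
      unfolding positive_lagrangian_def positive_def by blast
    define x0 where "x0 = (axis (undefined::'n) (1::real))"
    have x0: "x0 \<in> sphere 0 1" by (simp add: x0_def)
    have A: "vderiv \<zeta> u * (z u) powi (int CARD('n) - 2) / 2 \<notin> range (\<lambda>r. \<i> * complex_of_real r)"
      if nz: "\<forall>k::int. u \<noteq> pi * of_int k" for u
    proof -
      have zu: "z u \<noteq> 0" using scP(10)[OF sc] nz by blast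
      obtain u0 and \<sigma> :: real where u0: "u0 \<in> {0..pi}" "\<sigma> = 1 \<or> \<sigma> = -1" "z u = complex_of_real \<sigma> * z u0"
          "\<zeta> u = \<zeta> u0" "vderiv \<zeta> u = complex_of_real \<sigma> * vderiv \<zeta> u0"
        using normalize[OF sc, of u] by blast
      have z0: "z u0 \<noteq> 0" using zu u0(3) by auto
      define p where "p = (((\<chi> i. z u0 * complex_of_real (x0 $ i)) :: complex^'n), \<zeta> u0)"
      have "p \<in> ?L" unfolding p_def by (rule in_Lambda[OF x0])
      then obtain v where v: "\<And>j. v j \<in> tangent_vectors ?L p" and re: "Re (Omega f p v) \<noteq> 0"
        using pos by blast
      obtain r where r: "Omega f p v = of_real r * (vderiv \<zeta> u0 * z u0 powi (int CARD('n) - 2) / 2)"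
        using PA_all[OF sc sz, where v=v, OF p_def u0(1) x0 z0 v] by blast
      have K0: "Re (vderiv \<zeta> u0 * z u0 powi (int CARD('n) - 2) / 2) \<noteq> 0" using re r by simp
      define K0 where "K0 = vderiv \<zeta> u0 * z u0 powi (int CARD('n) - 2) / 2"
      define c where "c = \<sigma> * \<sigma> powi (int CARD('n) - 2)"
      have "vderiv \<zeta> u * (z u) powi (int CARD('n) - 2) / 2 = of_real c * K0"
        unfolding u0(3,5) K0_def c_def by (simp add: power_int_mult_distrib)
      moreover have "c \<noteq> 0" using u0(2) unfolding c_def by auto
      moreover have "Re K0 \<noteq> 0" using K0 unfolding K0_def .
      ultimately have "Re (vderiv \<zeta> u * (z u) powi (int CARD('n) - 2) / 2) \<noteq> 0" by simp
      then show ?thesis by (simp add: notin_iR)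
    qed
    have B: "(vderiv z u) ^ CARD('n) / poly (pderiv f) (\<zeta> u) \<notin> range (\<lambda>r. \<i> * complex_of_real r)"
      if u: "u \<in> {0, pi}" for u
    proof -
      have z0: "z u = 0" using u z_0[OF sc] z_pi[OF sc] by auto
      have u0: "u \<in> {0..pi}" using u by auto
      define p where "p = (((\<chi> i. z u * complex_of_real (x0 $ i)) :: complex^'n), \<zeta> u)"
      have "p \<in> ?L" unfolding p_def by (rule in_Lambda[OF x0])
      then obtain v where v: "\<And>j. v j \<in> tangent_vectors ?L p" and re: "Re (Omega f p v) \<noteq> 0"
        using pos by blast
      define Kb where "Kb = (vderiv z u) ^ CARD('n) / poly (pderiv f) (\<zeta> u)"
      obtain r where r: "Omega f p v = of_real r * Kb"
        using PB_all[OF sc sz, where v=v, OF p_def u0 x0 z0 v] unfolding Kb_def by blast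
      have "Re Kb \<noteq> 0" using re r by simp
      then have "Re ((vderiv z u) ^ CARD('n) / poly (pderiv f) (\<zeta> u)) \<noteq> 0" unfolding Kb_def .
      then show ?thesis by (simp add: notin_iR)
    qed
    show "(\<forall>u. (\<forall>k::int. u \<noteq> pi * of_int k) \<longrightarrow>
        vderiv \<zeta> u * (z u) powi (int CARD('n) - 2) / 2 \<notin> range (\<lambda>r. \<i> * complex_of_real r)) \<and>
     (\<forall>u\<in>{0, pi}.
        (vderiv z u) ^ CARD('n) / poly (pderiv f) (\<zeta> u) \<notin> range (\<lambda>r. \<i> * complex_of_real r))"
      using A B by blast
  next
    assume H: "(\<forall>u. (\<forall>k::int. u \<noteq> pi * of_int k) \<longrightarrow>
        vderiv \<zeta> u * (z u) powi (int CARD('n) - 2) / 2 \<notin> range (\<lambda>r. \<i> * complex_of_real r)) \<and>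
     (\<forall>u\<in>{0, pi}.
        (vderiv z u) ^ CARD('n) / poly (pderiv f) (\<zeta> u) \<notin> range (\<lambda>r. \<i> * complex_of_real r))"
    have rep: "\<exists>u0\<in>{0..pi}. \<exists>x0\<in>sphere 0 1. p = ((\<chi> i. z u0 * complex_of_real (x0 $ i)), \<zeta> u0)"
      if "p \<in> ?L" for p using Lambda_norm[OF sc that] .
    have iso: "lagrangian_isotropic ?L"
      unfolding lagrangian_isotropic_def
    proof (intro ballI)
      fix p v w assume p: "p \<in> ?L" and v: "v \<in> tangent_vectors ?L p" and w: "w \<in> tangent_vectors ?L p"
      obtain u0 x0 where u0: "u0 \<in> {0..pi}" and x0: "(x0::real^'n) \<in> sphere 0 1"
        and pe: "p = ((\<chi> i. z u0 * complex_of_real (x0 $ i)), \<zeta> u0)" using rep[OF p] by blast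
      show "kahler_form v w = 0"
      proof (cases "z u0 = 0")
        case True then show ?thesis by (rule PB_iso[OF sc sz pe u0 x0 _ v w])
      next
        case False then show ?thesis by (rule PA_iso[OF sc sz pe u0 x0 _ v w])
      qed
    qed
    have "positive f ?L"
      unfolding positive_def
    proof
      fix p assume p: "p \<in> ?L"
      obtain u0 x0 where u0: "u0 \<in> {0..pi}" and x0: "(x0::real^'n) \<in> sphere 0 1"
        and pe: "p = ((\<chi> i. z u0 * complex_of_real (x0 $ i)), \<zeta> u0)" using rep[OF p] by blast
      show "\<exists>v. (\<forall>j. v j \<in> tangent_vectors ?L p) \<and> Re (Omega f p v) \<noteq> 0"
      proof (cases "z u0 = 0")
        case True
        have u01: "u0 \<in> {0, pi}" by (rule u0_0pi[OF sc sz u0 True])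
        obtain v where v: "\<forall>j. v j \<in> tangent_vectors ?L p"
          and om: "Omega f p v = vderiv z u0 ^ CARD('n) / poly (pderiv f) (\<zeta> u0)"
          using PB_ex[OF sc sz pe u0 x0 True] by blast
        have "vderiv z u0 ^ CARD('n) / poly (pderiv f) (\<zeta> u0) \<notin> range (\<lambda>r. \<i> * complex_of_real r)"
          using H u01 by blast
        then have "Re (vderiv z u0 ^ CARD('n) / poly (pderiv f) (\<zeta> u0)) \<noteq> 0"
          using notin_iR by blast
        then have "Re (Omega f p v) \<noteq> 0" unfolding om .
        then show ?thesis using v by blast
      next
        case False
        have nk: "\<forall>k::int. u0 \<noteq> pi * of_int k" using False z_zero_pik[OF sc] by metis
        define K0 where "K0 = vderiv \<zeta> u0 * z u0 powi (int CARD('n) - 2) / 2"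
        obtain v r where v: "\<forall>j. v j \<in> tangent_vectors ?L p" and r: "r \<noteq> 0"
          and om: "Omega f p v = of_real r * K0"
          using PA_ex[OF sc sz pe u0 x0 False] unfolding K0_def by blast
        have "K0 \<notin> range (\<lambda>r. \<i> * complex_of_real r)"
          using H nk unfolding K0_def by blast
        then have "Re K0 \<noteq> 0" using notin_iR by blast
        then have "Re (Omega f p v) \<noteq> 0" using om r by simp
        then show ?thesis using v by blast
      qed
    qed
    then show "positive_lagrangian f ?L" using iso unfolding positive_lagrangian_def by blast
  qed
qed


end
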